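(* Let $N\ge1$ be an integer, $k>0$, $r>0$, $\alpha>0$ with $\alpha/r<\mu^*$. Let $\widetilde U^{\mathrm{eq}}=(x^{\mathrm{eq}},M_0^{\mathrm{eq}},M_1^{\mathrm{eq}},\dots)\in X_+$ be an equilibrium of the infinite system (S) below such that the corresponding equilibrium $U^{\mathrm{eq}}=(x^{\mathrm{eq}},u^{\mathrm{eq}},v^{\mathrm{eq}},w^{\mathrm{eq}},M_0^{\mathrm{eq}},\dots,M_N^{\mathrm{eq}})$ of the $(N+5)$-dimensional system $\dot U=F(U)$ is locally exponentially asymptotically stable. Then every solution $\widetilde U(t)$ of (S) that converges to $\widetilde U^{\mathrm{eq}}$ in the strong topology of $X$ as $t\to+\infty$ does so at an exponential rate, i.e. $\|\widetilde U(t)-\widetilde U^{\mathrm{eq}}\|\le Ce^{-\gamma t}$ for some $C,\gamma>0$ and all $t\ge0$.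
   Context: System (S): for $t\ge0$, $\dot M_0=r-kxM_0-M_0$, $\dot M_i=kxM_{i-1}-kxM_i-M_i$ ($i\ge1$), $\dot x=\alpha-kx\sum_{i=0}^\infty M_i+\sum_{i=N+1}^\infty iM_i$. $X$ is the Banach space of real sequences $(x,M_0,M_1,\dots)$ with norm $\|(x,M_0,M_1,\dots)\|=|x|+\sum_{i\ge0}(i+1)|M_i|<\infty$, and $X_+$ its nonnegative cone; solutions of (S) are the nonnegative solutions with values in $X_+$. To $(x,M_0,M_1,\dots)\in X_+$ corresponds $(x,u,v,w,M_0,\dots,M_N)\in\mathbb{R}^{N+5}$ with $u=\sum_{i\ge0}M_i$, $v=\sum_{i\ge N+1}iM_i$, $w=\sum_{i\ge N}M_i$. The map $F:\mathbb{R}^{N+5}\to\mathbb{R}^{N+5}$ (variables $U_1=x,U_2=u,U_3=v,U_4=w,U_{5+i}=M_i$) is $F_1=\alpha+U_3-kU_1U_2$, $F_2=r-U_2$, $F_3=-U_3+kU_1U_4+NkU_1U_{N+5}$, $F_4=-U_4+kU_1U_{N+4}$, $F_5=r-U_5-kU_1U_5$, $F_j=-U_j+kU_1U_{j-1}-kU_1U_j$ ($6\le j\le N+5$). Finally $\mu^*:=\widetilde{\mathcal F}_N(y^* )$, where $\widetilde{\mathcal F}_N(y)=\frac{y}{1-y}(1-(N+1)y^N+Ny^{N+1})$ and $y^*$ is the unique zero in $(0,1)$ of $p_N(y)=1-(N+1)^2y^N+N(2N+3)y^{N+1}-N(N+1)y^{N+2}$. *)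

theory Defs
  imports "HOL-Analysis.Analysis"
begin

text \<open>An element (x, M_0, M_1, ...) of X is represented as a pair (x, M) with
  M :: nat => real.  It lies in X iff sum (i+1)|M_i| converges.\<close>

definition inX :: "real \<Rightarrow> (nat \<Rightarrow> real) \<Rightarrow> bool" where
  "inX x M \<longleftrightarrow> summable (\<lambda>i. real (i + 1) * \<bar>M i\<bar>)"

definition inXplus :: "real \<Rightarrow> (nat \<Rightarrow> real) \<Rightarrow> bool" where
  "inXplus x M \<longleftrightarrow> inX x M \<and> x \<ge> 0 \<and> (\<forall>i. M i \<ge> 0)"

definition Xnorm :: "real \<Rightarrow> (nat \<Rightarrow> real) \<Rightarrow> real" where
  "Xnorm x M = \<bar>x\<bar> + (\<Sum>i. real (i + 1) * \<bar>M i\<bar>)"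

definition S_rhs_x :: "nat \<Rightarrow> real \<Rightarrow> real \<Rightarrow> real \<Rightarrow> (nat \<Rightarrow> real) \<Rightarrow> real" where
  "S_rhs_x N k \<alpha> x M = \<alpha> - k * x * (\<Sum>i. M i) + (\<Sum>i. (if i \<ge> N + 1 then real i * M i else 0))"

definition S_rhs_M :: "real \<Rightarrow> real \<Rightarrow> real \<Rightarrow> (nat \<Rightarrow> real) \<Rightarrow> nat \<Rightarrow> real" where
  "S_rhs_M k r x M i =
     (if i = 0 then r - k * x * M 0 - M 0
      else k * x * M (i - 1) - k * x * M i - M i)"

definition S_equilibrium :: "nat \<Rightarrow> real \<Rightarrow> real \<Rightarrow> real \<Rightarrow> real \<Rightarrow> (nat \<Rightarrow> real) \<Rightarrow> bool" where
  "S_equilibrium N k r \<alpha> x M \<longleftrightarrow>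
     inXplus x M \<and> S_rhs_x N k \<alpha> x M = 0 \<and> (\<forall>i. S_rhs_M k r x M i = 0)"

definition S_solution ::
  "nat \<Rightarrow> real \<Rightarrow> real \<Rightarrow> real \<Rightarrow> (real \<Rightarrow> real) \<Rightarrow> (real \<Rightarrow> nat \<Rightarrow> real) \<Rightarrow> bool" where
  "S_solution N k r \<alpha> x M \<longleftrightarrow>
     (\<forall>t\<ge>0. inXplus (x t) (M t)) \<and>
     (\<forall>t0\<ge>0. ((\<lambda>t. Xnorm (x t - x t0) (\<lambda>i. M t i - M t0 i)) \<longlongrightarrow> 0)
                 (at t0 within {0..})) \<and>
     (\<forall>t\<ge>0. (x has_real_derivative S_rhs_x N k \<alpha> (x t) (M t)) (at t within {0..})) \<and>
     (\<forall>t\<ge>0. \<forall>i. ((\<lambda>s. M s i) has_real_derivative S_rhs_M k r (x t) (M t) i)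
                   (at t within {0..}))"

text \<open>Vectors of R^(N+5) are functions nat => real, only the coordinates
  U_1, ..., U_(N+5) being relevant.\<close>

definition F_fin :: "nat \<Rightarrow> real \<Rightarrow> real \<Rightarrow> real \<Rightarrow> (nat \<Rightarrow> real) \<Rightarrow> nat \<Rightarrow> real" where
  "F_fin N k r \<alpha> U j =
     (if j = 1 then \<alpha> + U 3 - k * U 1 * U 2
      else if j = 2 then r - U 2
      else if j = 3 then - U 3 + k * U 1 * U 4 + real N * k * U 1 * U (N + 5)
      else if j = 4 then - U 4 + k * U 1 * U (N + 4)
      else if j = 5 then r - U 5 - k * U 1 * U 5
      else if 6 \<le> j \<and> j \<le> N + 5 then - U j + k * U 1 * U (j - 1) - k * U 1 * U j
      else 0)"

definition fin_dist :: "nat \<Rightarrow> (nat \<Rightarrow> real) \<Rightarrow> (nat \<Rightarrow> real) \<Rightarrow> real" where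
  "fin_dist N U V = (\<Sum>j=1..N+5. \<bar>U j - V j\<bar>)"

definition F_solution :: "nat \<Rightarrow> real \<Rightarrow> real \<Rightarrow> real \<Rightarrow> (real \<Rightarrow> nat \<Rightarrow> real) \<Rightarrow> bool" where
  "F_solution N k r \<alpha> U \<longleftrightarrow>
     (\<forall>t\<ge>0. \<forall>j\<in>{1..N+5}.
        ((\<lambda>s. U s j) has_real_derivative F_fin N k r \<alpha> (U t) j) (at t within {0..}))"

definition F_loc_exp_stable :: "nat \<Rightarrow> real \<Rightarrow> real \<Rightarrow> real \<Rightarrow> (nat \<Rightarrow> real) \<Rightarrow> bool" where
  "F_loc_exp_stable N k r \<alpha> Ue \<longleftrightarrow>
     (\<forall>j\<in>{1..N+5}. F_fin N k r \<alpha> Ue j = 0) \<and>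
     (\<exists>\<delta>>0. \<exists>C>0. \<exists>\<gamma>>0. \<forall>U0. fin_dist N U0 Ue < \<delta> \<longrightarrow>
        (\<exists>U. U 0 = U0 \<and> F_solution N k r \<alpha> U) \<and>
        (\<forall>U. U 0 = U0 \<and> F_solution N k r \<alpha> U \<longrightarrow>
           (\<forall>t\<ge>0. fin_dist N (U t) Ue \<le> C * exp (- \<gamma> * t) * fin_dist N U0 Ue)))"

definition reduce :: "nat \<Rightarrow> real \<Rightarrow> (nat \<Rightarrow> real) \<Rightarrow> nat \<Rightarrow> real" where
  "reduce N x M j =
     (if j = 1 then x
      else if j = 2 then (\<Sum>i. M i)
      else if j = 3 then (\<Sum>i. (if i \<ge> N + 1 then real i * M i else 0))
      else if j = 4 then (\<Sum>i. (if i \<ge> N then M i else 0))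
      else if 5 \<le> j \<and> j \<le> N + 5 then M (j - 5)
      else 0)"

definition Ftilde :: "nat \<Rightarrow> real \<Rightarrow> real" where
  "Ftilde N y = y / (1 - y) * (1 - real (N + 1) * y ^ N + real N * y ^ (N + 1))"

definition pN :: "nat \<Rightarrow> real \<Rightarrow> real" where
  "pN N y = 1 - (real N + 1)^2 * y ^ N + real N * (2 * real N + 3) * y ^ (N + 1)
            - real N * (real N + 1) * y ^ (N + 2)"

definition ystar :: "nat \<Rightarrow> real" where
  "ystar N = (THE y. 0 < y \<and> y < 1 \<and> pN N y = 0)"

definition mustar :: "nat \<Rightarrow> real" where
  "mustar N = Ftilde N (ystar N)"

end

theory Submission
  imports Defs
begin
lemma gronwall_exp:
  fixes \<phi> a \<beta> :: "real \<Rightarrow> real" and T t1 c0 B \<gamma> :: real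
  assumes Tt: "T \<le> t1" and g1: "\<gamma> < 1" and B0: "B \<ge> 0"
    and ca: "continuous_on {T..t1} a" and a0: "\<And>s. s\<in>{T..t1} \<Longrightarrow> a s \<ge> 0"
    and cphi: "continuous_on {T..t1} \<phi>" and cb: "continuous_on {T..t1} \<beta>"
    and ineq: "\<And>t. t\<in>{T..t1} \<Longrightarrow> \<phi> t \<le> c0 + integral {T..t} (\<lambda>s. a s * \<phi> s + \<beta> s)"
    and bb: "\<And>s. s\<in>{T..t1} \<Longrightarrow> exp (- integral {T..s} a) * \<beta> s \<le> B * exp ((1-\<gamma>)*(s-T))"
  shows "exp (- integral {T..t1} a) * \<phi> t1 \<le> c0 + B/(1-\<gamma>) * exp ((1-\<gamma>)*(t1-T))"
proof -
  define L where "L t = integral {T..t} a" for t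
  define I where "I t = integral {T..t} (\<lambda>s. a s * \<phi> s + \<beta> s)" for t
  have dL: "(L has_real_derivative a s) (at s within {T..t1})" if "s\<in>{T..t1}" for s
    unfolding L_def using integral_has_real_derivative[OF ca that] .
  have cI: "continuous_on {T..t1} (\<lambda>s. a s * \<phi> s + \<beta> s)"
    by (intro continuous_intros ca cphi cb)
  have dI: "(I has_real_derivative (a s * \<phi> s + \<beta> s)) (at s within {T..t1})" if "s\<in>{T..t1}" for s
    unfolding I_def using integral_has_real_derivative[OF cI that] .
  define J where "J t = exp (- L t) * (c0 + I t) - B * exp ((1-\<gamma>)*(t-T)) / (1-\<gamma>)" for t
  define J' where "J' s = exp (- L s) * (- a s) * (c0 + I s) + exp (- L s) * (a s * \<phi> s + \<beta> s) - B * exp ((1-\<gamma>)*(s-T))" for s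
  have dJ: "(J has_real_derivative J' s) (at s within {T..t1})" if s: "s\<in>{T..t1}" for s
  proof -
    have e1: "((\<lambda>t. - L t) has_real_derivative - a s) (at s within {T..t1})"
      using DERIV_minus[OF dL[OF s]] .
    have e2: "((\<lambda>t. exp (- L t)) has_real_derivative exp (- L s) * (- a s)) (at s within {T..t1})"
      using DERIV_chain2[OF DERIV_exp e1] .
    have e3: "((\<lambda>t. c0 + I t) has_real_derivative (a s * \<phi> s + \<beta> s)) (at s within {T..t1})"
      using DERIV_add[OF DERIV_const dI[OF s]] by simp
    have e4: "((\<lambda>t. exp (- L t) * (c0 + I t)) has_real_derivative
        exp (- L s) * (- a s) * (c0 + I s) + exp (- L s) * (a s * \<phi> s + \<beta> s)) (at s within {T..t1})"
      using DERIV_mult[OF e2 e3] by (simp add: algebra_simps)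
    have e5: "((\<lambda>t. (1-\<gamma>)*(t-T)) has_real_derivative (1-\<gamma>)) (at s within {T..t1})"
      by (auto intro!: derivative_eq_intros)
    have e6: "((\<lambda>t. B * exp ((1-\<gamma>)*(t-T)) / (1-\<gamma>)) has_real_derivative
        B * (exp ((1-\<gamma>)*(s-T)) * (1-\<gamma>)) / (1-\<gamma>)) (at s within {T..t1})"
      using DERIV_cdivide[OF DERIV_cmult[OF DERIV_chain2[OF DERIV_exp e5], of B], of "1-\<gamma>"] .
    have "(J has_real_derivative (exp (- L s) * (- a s) * (c0 + I s) + exp (- L s) * (a s * \<phi> s + \<beta> s)
            - B * (exp ((1-\<gamma>)*(s-T)) * (1-\<gamma>)) / (1-\<gamma>))) (at s within {T..t1})"
      unfolding J_def using DERIV_diff[OF e4 e6] .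
    moreover have "B * (exp ((1-\<gamma>)*(s-T)) * (1-\<gamma>)) / (1-\<gamma>) = B * exp ((1-\<gamma>)*(s-T))"
      using g1 by simp
    ultimately show ?thesis unfolding J'_def by simp
  qed
  have J'nonpos: "J' s \<le> 0" if s: "s\<in>{T..t1}" for s
  proof -
    have "a s * (\<phi> s - c0 - I s) \<le> 0"
      using a0[OF s] ineq[OF s] unfolding I_def by (simp add: mult_nonneg_nonpos)
    hence "exp (- L s) * (a s * (\<phi> s - c0 - I s)) \<le> 0" by (simp add: mult_nonneg_nonpos)
    moreover have "exp (- L s) * \<beta> s \<le> B * exp ((1-\<gamma>)*(s-T))" using bb[OF s] unfolding L_def .
    moreover have "J' s = exp (- L s) * (a s * (\<phi> s - c0 - I s)) + exp (- L s) * \<beta> s - B * exp ((1-\<gamma>)*(s-T))"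
      unfolding J'_def by (simp add: algebra_simps)
    ultimately show ?thesis by linarith
  qed
  obtain z where z: "z\<in>{T..t1}" "J t1 - J T = J' z * (t1 - T)"
    using mvt_very_simple[OF Tt, of J "\<lambda>s h. J' s * h"] dJ unfolding has_field_derivative_def
    by auto
  have "J' z * (t1 - T) \<le> 0" using J'nonpos[OF z(1)] Tt by (simp add: mult_nonpos_nonneg)
  hence "J t1 \<le> J T" using z(2) by linarith
  moreover have "J T = c0 - B / (1-\<gamma>)" unfolding J_def L_def I_def by simp
  ultimately have "exp (- L t1) * (c0 + I t1) \<le> c0 - B/(1-\<gamma>) + B * exp ((1-\<gamma>)*(t1-T)) / (1-\<gamma>)"
    unfolding J_def by simp
  moreover have "B/(1-\<gamma>) \<ge> 0" using B0 g1 by simp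
  moreover have "exp (- L t1) * \<phi> t1 \<le> exp (- L t1) * (c0 + I t1)"
    using ineq[of t1] Tt unfolding I_def by simp
  ultimately show ?thesis unfolding L_def by (simp add: field_simps)
qed

lemma shift_sum_le:
  fixes w f :: "nat \<Rightarrow> real"
  assumes "\<And>i. 0 \<le> w i * (if i = 0 then 0 else f (i - 1))"
  shows "(\<Sum>i<n. w i * (if i = 0 then 0 else f (i - 1))) \<le> (\<Sum>i<n. w (Suc i) * f i)"
proof -
  have "(\<Sum>i<n. w i * (if i = 0 then 0 else f (i - 1))) \<le> (\<Sum>i<Suc n. w i * (if i = 0 then 0 else f (i - 1)))"
    using assms[of n] by simp
  also have "\<dots> = (\<Sum>i<n. w (Suc i) * f i)"
    by (subst sum.lessThan_Suc_shift) simp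
  finally show ?thesis .
qed

lemma part2:
  fixes x :: "real \<Rightarrow> real" and M :: "real \<Rightarrow> nat \<Rightarrow> real" and xe c \<gamma> k r :: real
    and Me :: "nat \<Rightarrow> real"
  assumes kpos: "k > 0"
    and xnn: "\<And>s. s \<ge> 0 \<Longrightarrow> x s \<ge> 0"
    and xcont: "continuous_on {0..} x"
    and dM: "\<And>s i. s \<ge> 0 \<Longrightarrow> ((\<lambda>s. M s i) has_real_derivative S_rhs_M k r (x s) (M s) i) (at s within {0..})"
    and sM: "\<And>s. s \<ge> 0 \<Longrightarrow> summable (\<lambda>i. real (i+1) * \<bar>M s i\<bar>)"
    and eq: "\<And>i. S_rhs_M k r xe Me i = 0"
    and sMe: "summable (\<lambda>i. real (i+1) * \<bar>Me i\<bar>)"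
    and g0: "0 < \<gamma>" and g1: "\<gamma> < 1" and c0: "c \<ge> 0"
    and decay: "\<And>s. s \<ge> 0 \<Longrightarrow> k * \<bar>x s - xe\<bar> \<le> c * exp (- \<gamma> * s)"
  shows "\<exists>C. \<forall>t\<ge>0. (\<Sum>i. real (i+1) * \<bar>M t i - Me i\<bar>) \<le> C * exp (- \<gamma> * t)"
proof -
  define a where "a s = k * x s" for s
  define ae where "ae = k * xe"
  define L where "L t = integral {0..t} a" for t
  define A where "A t = L t + t" for t
  define D where "D i s = M s i - Me i" for i s
  define E where "E i s = exp (A s) * D i s" for i s
  define EE where "EE i s = (if i = 0 then 0 else E (i - 1) s)" for i s
  define g where "g i = (if i = 0 then 0 else Me (i - 1)) - Me i" for i
  define \<epsilon> where "\<epsilon> s = \<bar>a s - ae\<bar>" for s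
  define SMe where "SMe = (\<Sum>i. real (i+1) * \<bar>Me i\<bar>)"
  define G where "G = 3 * SMe"
  define P0 where "P0 = (\<Sum>i. real (i+1) * \<bar>D i 0\<bar>)"
  define Ka where "Ka = ae + c"
  have SMe0: "SMe \<ge> 0" unfolding SMe_def by (intro suminf_nonneg sMe) simp
  have G0: "G \<ge> 0" unfolding G_def using SMe0 by simp
  have sD0: "summable (\<lambda>i. real (i+1) * \<bar>D i 0\<bar>)"
  proof (rule summable_comparison_test[OF _ summable_add[OF sM[of 0] sMe]])
    show "\<exists>N. \<forall>n\<ge>N. norm (real (n+1) * \<bar>D n 0\<bar>) \<le> real (n + 1) * \<bar>M 0 n\<bar> + real (n + 1) * \<bar>Me n\<bar>"
      unfolding D_def by (auto simp: abs_mult distrib_left[symmetric] intro!: mult_left_mono)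
  qed simp
  have P00: "P0 \<ge> 0" unfolding P0_def by (intro suminf_nonneg sD0) simp
  have Gbound: "(\<Sum>i<n. real (i+1) * \<bar>g i\<bar>) \<le> G" for n
  proof -
    have "(\<Sum>i<n. real (i+1) * \<bar>g i\<bar>) \<le> (\<Sum>i<n. real (i+1) * (if i = 0 then 0 else \<bar>Me (i - 1)\<bar>)) + (\<Sum>i<n. real (i+1) * \<bar>Me i\<bar>)"
      unfolding sum.distrib[symmetric] g_def
      by (intro sum_mono) (auto simp: distrib_left[symmetric] intro!: mult_left_mono)
    also have "(\<Sum>i<n. real (i+1) * (if i = 0 then 0 else \<bar>Me (i - 1)\<bar>)) \<le> (\<Sum>i<n. real (Suc i + 1) * \<bar>Me i\<bar>)"
      by (rule shift_sum_le[where w="\<lambda>i. real (i+1)" and f="\<lambda>i. \<bar>Me i\<bar>"]) simp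
    also have "\<dots> \<le> (\<Sum>i<n. 2 * (real (i + 1) * \<bar>Me i\<bar>))"
    proof (intro sum_mono)
      fix i
      have "(2 + real i) * \<bar>Me i\<bar> \<le> (2 * (1 + real i)) * \<bar>Me i\<bar>"
        by (intro mult_right_mono) auto
      thus "real (Suc i + 1) * \<bar>Me i\<bar> \<le> 2 * (real (i + 1) * \<bar>Me i\<bar>)" by (simp add: algebra_simps)
    qed
    also have "\<dots> = 2 * (\<Sum>i<n. real (i + 1) * \<bar>Me i\<bar>)" by (simp add: sum_distrib_left)
    finally have "(\<Sum>i<n. real (i+1) * \<bar>g i\<bar>) \<le> 3 * (\<Sum>i<n. real (i + 1) * \<bar>Me i\<bar>)" by simp
    also have "\<dots> \<le> G" unfolding G_def SMe_def
      by (intro mult_left_mono sum_le_suminf sMe) auto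
    finally show ?thesis .
  qed
  have G1bound: "(\<Sum>i<n. \<bar>g i\<bar>) \<le> G" for n
  proof (rule order_trans[OF sum_mono Gbound[of n]])
    fix i
    have "1 * \<bar>g i\<bar> \<le> real (i+1) * \<bar>g i\<bar>" by (intro mult_right_mono) auto
    thus "\<bar>g i\<bar> \<le> real (i+1) * \<bar>g i\<bar>" by simp
  qed
  have anng: "a s \<ge> 0" if "s \<ge> 0" for s unfolding a_def using xnn[OF that] kpos by simp
  have eps_dec: "\<epsilon> s \<le> c * exp (- \<gamma> * s)" if "s \<ge> 0" for s
    using decay[OF that] kpos unfolding \<epsilon>_def a_def ae_def
    by (simp add: abs_mult right_diff_distrib[symmetric])
  have aKa: "a s \<le> Ka" if "s \<ge> 0" for s
  proof -
    have "exp (- \<gamma> * s) \<le> 1" using g0 that by simp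
    hence "c * exp (- \<gamma> * s) \<le> c" using c0 by (simp add: mult_left_le)
    thus ?thesis using eps_dec[OF that] unfolding Ka_def \<epsilon>_def by linarith
  qed
  have ca: "continuous_on {0..\<tau>} a" for \<tau>
    unfolding a_def by (intro continuous_intros continuous_on_subset[OF xcont]) auto
  have dL: "(L has_real_derivative a s) (at s within {0..\<tau>})" if "s \<in> {0..\<tau>}" for s \<tau>
    unfolding L_def using integral_has_real_derivative[OF ca that] .
  have dA: "(A has_real_derivative a s + 1) (at s within {0..\<tau>})" if "s \<in> {0..\<tau>}" for s \<tau>
    unfolding A_def[abs_def] using DERIV_add[OF dL[OF that] DERIV_ident] .
  have rhs: "S_rhs_M k r (x s) (M s) i = a s * (if i = 0 then 0 else D (i - 1) s) - (a s + 1) * D i s + (a s - ae) * g i" for s i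
    using eq[of i] unfolding S_rhs_M_def a_def ae_def D_def g_def
    by (cases "i = 0") (auto simp: algebra_simps)
  have dD: "(D i has_real_derivative S_rhs_M k r (x s) (M s) i) (at s within {0..\<tau>})" if "s \<in> {0..\<tau>}" for s \<tau> i
  proof -
    have "((\<lambda>s. M s i) has_real_derivative S_rhs_M k r (x s) (M s) i) (at s within {0..\<tau>})"
      by (rule DERIV_subset[OF dM]) (use that in auto)
    hence "((\<lambda>s. M s i - Me i) has_real_derivative S_rhs_M k r (x s) (M s) i - 0) (at s within {0..\<tau>})"
      by (intro DERIV_diff DERIV_const)
    thus ?thesis unfolding D_def[abs_def] by simp
  qed
  define E' where "E' i s = a s * EE i s + exp (A s) * (a s - ae) * g i" for i s
  have dE: "(E i has_real_derivative E' i s) (at s within {0..\<tau>})" if "s \<in> {0..\<tau>}" for s \<tau> i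
  proof -
    have "((\<lambda>s. exp (A s) * D i s) has_real_derivative
         exp (A s) * (a s + 1) * D i s + exp (A s) * S_rhs_M k r (x s) (M s) i) (at s within {0..\<tau>})"
      using DERIV_mult[OF DERIV_chain2[OF DERIV_exp dA[OF that]] dD[OF that]] by (simp add: algebra_simps)
    moreover have "exp (A s) * (a s + 1) * D i s + exp (A s) * S_rhs_M k r (x s) (M s) i = E' i s"
      unfolding rhs E'_def EE_def E_def by (auto simp: algebra_simps)
    ultimately show ?thesis unfolding E_def[abs_def] by simp
  qed
  have cE: "continuous_on {0..\<tau>} (E i)" for \<tau> i
    by (rule DERIV_continuous_on[OF dE])
  have cEE: "continuous_on {0..\<tau>} (EE i)" for \<tau> i
    unfolding EE_def[abs_def] by (cases "i = 0") (auto intro: cE)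
  have cA: "continuous_on {0..\<tau>} A" for \<tau>
    by (rule DERIV_continuous_on[OF dA])
  have ceps: "continuous_on {0..\<tau>} \<epsilon>" for \<tau>
    unfolding \<epsilon>_def[abs_def] by (intro continuous_intros ca)
  have comp: "\<bar>E i \<tau>\<bar> \<le> \<bar>E i 0\<bar> + integral {0..\<tau>} (\<lambda>s. a s * \<bar>EE i s\<bar> + exp (A s) * \<epsilon> s * \<bar>g i\<bar>)"
    if "\<tau> \<ge> 0" for \<tau> i
  proof -
    have "(E' i has_integral (E i \<tau> - E i 0)) {0..\<tau>}"
      using fundamental_theorem_of_calculus[OF that, of "E i" "E' i"] dE
      by (simp add: has_real_derivative_iff_has_vector_derivative[symmetric])
    hence int: "E' i integrable_on {0..\<tau>}" and ieq: "integral {0..\<tau>} (E' i) = E i \<tau> - E i 0"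
      by (auto simp: has_integral_iff)
    have "norm (integral {0..\<tau>} (E' i)) \<le> integral {0..\<tau>} (\<lambda>s. a s * \<bar>EE i s\<bar> + exp (A s) * \<epsilon> s * \<bar>g i\<bar>)"
    proof (rule integral_norm_bound_integral[OF int])
      show "(\<lambda>s. a s * \<bar>EE i s\<bar> + exp (A s) * \<epsilon> s * \<bar>g i\<bar>) integrable_on {0..\<tau>}"
        by (intro integrable_continuous_interval continuous_intros ca cEE cA ceps)
      fix s assume s: "s \<in> {0..\<tau>}"
      have "\<bar>E' i s\<bar> \<le> \<bar>a s * EE i s\<bar> + \<bar>exp (A s) * (a s - ae) * g i\<bar>"
        unfolding E'_def by (rule abs_triangle_ineq)
      also have "\<dots> = a s * \<bar>EE i s\<bar> + exp (A s) * \<epsilon> s * \<bar>g i\<bar>"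
        using anng[of s] s unfolding \<epsilon>_def by (simp add: abs_mult)
      finally show "norm (E' i s) \<le> a s * \<bar>EE i s\<bar> + exp (A s) * \<epsilon> s * \<bar>g i\<bar>" by simp
    qed
    thus ?thesis using ieq by simp
  qed
  define h where "h i s = a s * \<bar>EE i s\<bar> + exp (A s) * \<epsilon> s * \<bar>g i\<bar>" for i s
  have ch: "continuous_on {0..\<tau>} (h i)" for \<tau> i
    unfolding h_def[abs_def] by (intro continuous_intros ca cEE cA ceps)
  have E0: "E i 0 = D i 0" for i unfolding E_def A_def L_def by simp
  have wsum: "(\<Sum>i<n. w i * \<bar>E i \<tau>\<bar>) \<le> (\<Sum>i<n. w i * \<bar>D i 0\<bar>) + integral {0..\<tau>} (\<lambda>s. \<Sum>i<n. w i * h i s)"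
    if "\<tau> \<ge> 0" "\<And>i. w i \<ge> 0" for \<tau> n and w :: "nat \<Rightarrow> real"
  proof -
    have "(\<Sum>i<n. w i * \<bar>E i \<tau>\<bar>) \<le> (\<Sum>i<n. w i * \<bar>D i 0\<bar> + w i * integral {0..\<tau>} (h i))"
      using comp[OF that(1)] that(2) E0 unfolding h_def[symmetric]
      by (intro sum_mono) (auto simp: distrib_left[symmetric] intro!: mult_left_mono)
    also have "\<dots> = (\<Sum>i<n. w i * \<bar>D i 0\<bar>) + integral {0..\<tau>} (\<lambda>s. \<Sum>i<n. w i * h i s)"
      by (subst integral_sum) (auto intro!: integrable_continuous_interval continuous_intros ch simp: sum.distrib)
    finally show ?thesis .
  qed
  define \<Phi> where "\<Phi> n s = (\<Sum>i<n. \<bar>E i s\<bar>)" for n s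
  define W where "W n s = (\<Sum>i<n. real (i+1) * \<bar>E i s\<bar>)" for n s
  have cPhi: "continuous_on {0..\<tau>} (\<Phi> n)" for \<tau> n
    unfolding \<Phi>_def[abs_def] by (intro continuous_intros cE)
  have cW: "continuous_on {0..\<tau>} (W n)" for \<tau> n
    unfolding W_def[abs_def] by (intro continuous_intros cE)
  have D0P0: "(\<Sum>i<n. real (i+1) * \<bar>D i 0\<bar>) \<le> P0" for n
    unfolding P0_def by (intro sum_le_suminf sD0) auto
  have D0P0': "(\<Sum>i<n. \<bar>D i 0\<bar>) \<le> P0" for n
  proof (rule order_trans[OF sum_mono D0P0[of n]])
    fix i
    have "1 * \<bar>D i 0\<bar> \<le> real (i+1) * \<bar>D i 0\<bar>" by (intro mult_right_mono) auto
    thus "\<bar>D i 0\<bar> \<le> real (i+1) * \<bar>D i 0\<bar>" by simp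
  qed
  have Phi_ineq: "\<Phi> n \<tau> \<le> P0 + integral {0..\<tau>} (\<lambda>s. a s * \<Phi> n s + exp (A s) * \<epsilon> s * G)" if "\<tau> \<ge> 0" for n \<tau>
  proof -
    have "\<Phi> n \<tau> \<le> (\<Sum>i<n. 1 * \<bar>D i 0\<bar>) + integral {0..\<tau>} (\<lambda>s. \<Sum>i<n. 1 * h i s)"
      using wsum[OF that, of "\<lambda>_. 1" n] unfolding \<Phi>_def by simp
    also have "\<dots> \<le> P0 + integral {0..\<tau>} (\<lambda>s. a s * \<Phi> n s + exp (A s) * \<epsilon> s * G)"
    proof (rule add_mono)
      show "(\<Sum>i<n. 1 * \<bar>D i 0\<bar>) \<le> P0" using D0P0' by simp
      show "integral {0..\<tau>} (\<lambda>s. \<Sum>i<n. 1 * h i s) \<le> integral {0..\<tau>} (\<lambda>s. a s * \<Phi> n s + exp (A s) * \<epsilon> s * G)"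
      proof (rule integral_le)
        show "(\<lambda>s. \<Sum>i<n. 1 * h i s) integrable_on {0..\<tau>}"
          by (intro integrable_continuous_interval continuous_intros ch)
        show "(\<lambda>s. a s * \<Phi> n s + exp (A s) * \<epsilon> s * G) integrable_on {0..\<tau>}"
          by (intro integrable_continuous_interval continuous_intros ca cPhi cA ceps)
        fix s assume s: "s \<in> {0..\<tau>}"
        have as: "a s \<ge> 0" using anng s by auto
        have e0: "exp (A s) * \<epsilon> s \<ge> 0" unfolding \<epsilon>_def by simp
        have "(\<Sum>i<n. 1 * h i s) = a s * (\<Sum>i<n. 1 * (if i = 0 then 0 else \<bar>E (i - 1) s\<bar>)) + exp (A s) * \<epsilon> s * (\<Sum>i<n. \<bar>g i\<bar>)"
        proof -
          have "\<And>i. 1 * h i s = a s * (1 * (if i = 0 then 0 else \<bar>E (i - 1) s\<bar>)) + exp (A s) * \<epsilon> s * \<bar>g i\<bar>"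
            unfolding h_def EE_def by auto
          hence "(\<Sum>i<n. 1 * h i s) = (\<Sum>i<n. a s * (1 * (if i = 0 then 0 else \<bar>E (i - 1) s\<bar>)) + exp (A s) * \<epsilon> s * \<bar>g i\<bar>)"
            by presburger
          thus ?thesis by (simp add: sum.distrib sum_distrib_left)
        qed
        also have "\<dots> \<le> a s * \<Phi> n s + exp (A s) * \<epsilon> s * G"
        proof (rule add_mono)
          have "(\<Sum>i<n. 1 * (if i = 0 then 0 else \<bar>E (i - 1) s\<bar>)) \<le> (\<Sum>i<n. 1 * \<bar>E i s\<bar>)"
            by (rule shift_sum_le[where w="\<lambda>_. 1" and f="\<lambda>i. \<bar>E i s\<bar>"]) simp
          thus "a s * (\<Sum>i<n. 1 * (if i = 0 then 0 else \<bar>E (i - 1) s\<bar>)) \<le> a s * \<Phi> n s"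
            unfolding \<Phi>_def using as by (intro mult_left_mono) auto
          show "exp (A s) * \<epsilon> s * (\<Sum>i<n. \<bar>g i\<bar>) \<le> exp (A s) * \<epsilon> s * G"
            using e0 G1bound by (intro mult_left_mono) auto
        qed
        finally show "(\<Sum>i<n. 1 * h i s) \<le> a s * \<Phi> n s + exp (A s) * \<epsilon> s * G" .
      qed
    qed
    finally show ?thesis .
  qed
  have W_ineq: "W n \<tau> \<le> P0 + integral {0..\<tau>} (\<lambda>s. a s * W n s + (a s * \<Phi> n s + exp (A s) * \<epsilon> s * G))" if "\<tau> \<ge> 0" for n \<tau>
  proof -
    have "W n \<tau> \<le> (\<Sum>i<n. real (i+1) * \<bar>D i 0\<bar>) + integral {0..\<tau>} (\<lambda>s. \<Sum>i<n. real (i+1) * h i s)"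
      using wsum[OF that, of "\<lambda>i. real (i+1)" n] unfolding W_def by simp
    also have "\<dots> \<le> P0 + integral {0..\<tau>} (\<lambda>s. a s * W n s + (a s * \<Phi> n s + exp (A s) * \<epsilon> s * G))"
    proof (rule add_mono)
      show "(\<Sum>i<n. real (i+1) * \<bar>D i 0\<bar>) \<le> P0" using D0P0 by simp
      show "integral {0..\<tau>} (\<lambda>s. \<Sum>i<n. real (i+1) * h i s) \<le> integral {0..\<tau>} (\<lambda>s. a s * W n s + (a s * \<Phi> n s + exp (A s) * \<epsilon> s * G))"
      proof (rule integral_le)
        show "(\<lambda>s. \<Sum>i<n. real (i+1) * h i s) integrable_on {0..\<tau>}"
          by (intro integrable_continuous_interval continuous_intros ch)
        show "(\<lambda>s. a s * W n s + (a s * \<Phi> n s + exp (A s) * \<epsilon> s * G)) integrable_on {0..\<tau>}"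
          by (intro integrable_continuous_interval continuous_intros ca cPhi cW cA ceps)
        fix s assume s: "s \<in> {0..\<tau>}"
        have as: "a s \<ge> 0" using anng s by auto
        have e0: "exp (A s) * \<epsilon> s \<ge> 0" unfolding \<epsilon>_def by simp
        have "(\<Sum>i<n. real (i+1) * h i s) = a s * (\<Sum>i<n. real (i+1) * (if i = 0 then 0 else \<bar>E (i - 1) s\<bar>)) + exp (A s) * \<epsilon> s * (\<Sum>i<n. real (i+1) * \<bar>g i\<bar>)"
        proof -
          have "\<And>i. real (i+1) * h i s = a s * (real (i+1) * (if i = 0 then 0 else \<bar>E (i - 1) s\<bar>)) + exp (A s) * \<epsilon> s * (real (i+1) * \<bar>g i\<bar>)"
            unfolding h_def EE_def by (auto simp: algebra_simps)
          hence "(\<Sum>i<n. real (i+1) * h i s) = (\<Sum>i<n. a s * (real (i+1) * (if i = 0 then 0 else \<bar>E (i - 1) s\<bar>)) + exp (A s) * \<epsilon> s * (real (i+1) * \<bar>g i\<bar>))"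
            by presburger
          thus ?thesis by (simp add: sum.distrib sum_distrib_left)
        qed
        also have "\<dots> \<le> a s * (W n s + \<Phi> n s) + exp (A s) * \<epsilon> s * G"
        proof (rule add_mono)
          have "(\<Sum>i<n. real (i+1) * (if i = 0 then 0 else \<bar>E (i - 1) s\<bar>)) \<le> (\<Sum>i<n. real (Suc i + 1) * \<bar>E i s\<bar>)"
            by (rule shift_sum_le[where w="\<lambda>i. real (i+1)" and f="\<lambda>i. \<bar>E i s\<bar>"]) simp
          also have "\<dots> = W n s + \<Phi> n s"
            unfolding W_def \<Phi>_def sum.distrib[symmetric] by (intro sum.cong) (auto simp: algebra_simps)
          finally show "a s * (\<Sum>i<n. real (i+1) * (if i = 0 then 0 else \<bar>E (i - 1) s\<bar>)) \<le> a s * (W n s + \<Phi> n s)"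
            using as by (intro mult_left_mono) auto
          show "exp (A s) * \<epsilon> s * (\<Sum>i<n. real (i+1) * \<bar>g i\<bar>) \<le> exp (A s) * \<epsilon> s * G"
            using e0 Gbound by (intro mult_left_mono) auto
        qed
        finally show "(\<Sum>i<n. real (i+1) * h i s) \<le> a s * W n s + (a s * \<Phi> n s + exp (A s) * \<epsilon> s * G)"
          by (simp add: algebra_simps)
      qed
    qed
    finally show ?thesis .
  qed
  have expLA: "exp (- L s) * exp (A s) = exp s" for s
    unfolding A_def by (simp add: exp_add[symmetric])
  have src_bound: "exp (- L s) * (exp (A s) * \<epsilon> s * G) \<le> c * G * exp ((1 - \<gamma>) * s)" if "s \<ge> 0" for s
  proof -
    have "exp (- L s) * (exp (A s) * \<epsilon> s * G) = exp s * \<epsilon> s * G"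
      using expLA[of s] by (simp add: algebra_simps)
    also have "\<dots> \<le> exp s * (c * exp (- \<gamma> * s)) * G"
      using eps_dec[OF that] G0 by (intro mult_right_mono mult_left_mono) auto
    also have "\<dots> = c * G * exp ((1 - \<gamma>) * s)"
      by (simp add: algebra_simps exp_add[symmetric])
    finally show ?thesis .
  qed
  have Lint: "integral {0..t} a = L t" for t unfolding L_def ..
  have cb1: "continuous_on {0..t} (\<lambda>s. exp (A s) * \<epsilon> s * G)" for t
    by (intro continuous_intros cA ceps)
  have cb2: "continuous_on {0..t} (\<lambda>s. a s * \<Phi> n s + exp (A s) * \<epsilon> s * G)" for t n
    by (intro continuous_intros cA ceps ca cPhi)
  have RPhi: "exp (- L t) * \<Phi> n t \<le> P0 + c * G / (1 - \<gamma>) * exp ((1 - \<gamma>) * t)" if "t \<ge> 0" for n t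
    using gronwall_exp[of 0 t \<gamma> "c * G" a "\<Phi> n" "\<lambda>s. exp (A s) * \<epsilon> s * G" P0]
      that g1 c0 G0 ca cPhi anng Phi_ineq src_bound
      cb1[of t]
    unfolding Lint by auto
  define B2 where "B2 = Ka * (P0 + c * G / (1 - \<gamma>)) + c * G"
  have B20: "B2 \<ge> 0" unfolding B2_def using c0 G0 P00 g1 aKa[of 0] anng[of 0]
    by (intro add_nonneg_nonneg mult_nonneg_nonneg) auto
  have src2: "exp (- L s) * (a s * \<Phi> n s + exp (A s) * \<epsilon> s * G) \<le> B2 * exp ((1 - \<gamma>) * s)" if s: "s \<ge> 0" for s n
  proof -
    have ex1: "exp ((1 - \<gamma>) * s) \<ge> 1" using g1 s by simp
    have Phi0: "\<Phi> n s \<ge> 0" unfolding \<Phi>_def by (simp add: sum_nonneg)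
    have "exp (- L s) * \<Phi> n s \<le> P0 + c * G / (1 - \<gamma>) * exp ((1 - \<gamma>) * s)" using RPhi[OF s] .
    also have "\<dots> \<le> (P0 + c * G / (1 - \<gamma>)) * exp ((1 - \<gamma>) * s)"
      using ex1 P00 by (simp add: algebra_simps mult_le_cancel_left1)
    finally have p1: "exp (- L s) * \<Phi> n s \<le> (P0 + c * G / (1 - \<gamma>)) * exp ((1 - \<gamma>) * s)" .
    have "a s * (exp (- L s) * \<Phi> n s) \<le> Ka * ((P0 + c * G / (1 - \<gamma>)) * exp ((1 - \<gamma>) * s))"
      by (rule mult_mono[OF aKa[OF s] p1]) (use aKa[OF s] anng[OF s] Phi0 in auto)
    moreover have "exp (- L s) * (exp (A s) * \<epsilon> s * G) \<le> c * G * exp ((1 - \<gamma>) * s)" using src_bound[OF s] .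
    ultimately show ?thesis unfolding B2_def by (simp add: algebra_simps)
  qed
  have RW: "exp (- L t) * W n t \<le> P0 + B2 / (1 - \<gamma>) * exp ((1 - \<gamma>) * t)" if "t \<ge> 0" for n t
    using gronwall_exp[of 0 t \<gamma> B2 a "W n" "\<lambda>s. a s * \<Phi> n s + exp (A s) * \<epsilon> s * G" P0]
      that g1 B20 ca cW anng W_ineq src2
      cb2[of t n]
    unfolding Lint by auto
  define C where "C = P0 + B2 / (1 - \<gamma>)"
  have "(\<Sum>i. real (i+1) * \<bar>M t i - Me i\<bar>) \<le> C * exp (- \<gamma> * t)" if t: "t \<ge> 0" for t
  proof -
    have sDt: "summable (\<lambda>i. real (i+1) * \<bar>M t i - Me i\<bar>)"
    proof (rule summable_comparison_test[OF _ summable_add[OF sM[OF t] sMe]])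
      show "\<exists>N. \<forall>n\<ge>N. norm (real (n+1) * \<bar>M t n - Me n\<bar>) \<le> real (n + 1) * \<bar>M t n\<bar> + real (n + 1) * \<bar>Me n\<bar>"
        by (auto simp: abs_mult distrib_left[symmetric] intro!: mult_left_mono)
    qed
    show ?thesis
    proof (rule suminf_le_const[OF sDt])
      fix n
      have "(\<Sum>i<n. real (i+1) * \<bar>M t i - Me i\<bar>) = exp (- t) * (exp (- L t) * W n t)"
      proof -
        have "exp (- t) * (exp (- L t) * W n t) = exp (- A t) * W n t"
          unfolding A_def by (simp add: exp_add[symmetric] algebra_simps)
        also have "\<dots> = (\<Sum>i<n. real (i+1) * \<bar>D i t\<bar>)"
          unfolding W_def E_def sum_distrib_left by (intro sum.cong) (auto simp: abs_mult exp_minus field_simps)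
        finally show ?thesis unfolding D_def by simp
      qed
      also have "\<dots> \<le> exp (- t) * (P0 + B2 / (1 - \<gamma>) * exp ((1 - \<gamma>) * t))"
        using RW[OF t] by simp
      also have "\<dots> = exp (- t) * P0 + B2 / (1 - \<gamma>) * exp (- \<gamma> * t)"
        by (simp add: algebra_simps exp_add[symmetric])
      also have "\<dots> \<le> exp (- \<gamma> * t) * P0 + B2 / (1 - \<gamma>) * exp (- \<gamma> * t)"
        using P00 g1 t mult_right_mono[of \<gamma> 1 t] by (intro add_mono mult_right_mono) auto
      also have "\<dots> = C * exp (- \<gamma> * t)" unfolding C_def by (simp add: algebra_simps)
      finally show "(\<Sum>i<n. real (i+1) * \<bar>M t i - Me i\<bar>) \<le> C * exp (- \<gamma> * t)" .
    qed
  qed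
  thus ?thesis by blast
qed

lemma tail_mono:
  fixes f :: "nat \<Rightarrow> real"
  assumes "summable f" "\<And>i. f i \<ge> 0" "n \<le> m"
  shows "(\<Sum>i. f (i + m)) \<le> (\<Sum>i. f (i + n))"
proof -
  have s: "summable (\<lambda>i. f (i + n))" using summable_ignore_initial_segment[OF assms(1)] .
  have "(\<Sum>i. f (i + n)) = (\<Sum>i. f (i + (m - n) + n)) + (\<Sum>i<m - n. f (i + n))"
    using suminf_split_initial_segment[OF s, of "m - n"] .
  moreover have "(\<Sum>i. f (i + (m - n) + n)) = (\<Sum>i. f (i + m))" using assms(3) by (simp add: add.assoc)
  moreover have "(\<Sum>i<m - n. f (i + n)) \<ge> 0" using assms(2) by (simp add: sum_nonneg)
  ultimately show ?thesis by linarith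
qed

lemma tail_le_sum:
  fixes f :: "nat \<Rightarrow> real"
  assumes "summable f" "\<And>i. f i \<ge> 0"
  shows "(\<Sum>i. f (i + n)) \<le> (\<Sum>i. f i)"
  using tail_mono[OF assms, of 0 n] by simp

lemma tail_nonneg:
  fixes f :: "nat \<Rightarrow> real"
  assumes "summable f" "\<And>i. f i \<ge> 0"
  shows "(\<Sum>i. f (i + n)) \<ge> 0"
  using assms by (intro suminf_nonneg summable_ignore_initial_segment) auto

context
  fixes x :: "real \<Rightarrow> real" and M :: "real \<Rightarrow> nat \<Rightarrow> real"
  assumes Mnn: "\<And>s i. s \<ge> 0 \<Longrightarrow> M s i \<ge> 0"
    and sM: "\<And>s. s \<ge> 0 \<Longrightarrow> summable (\<lambda>i. real (i+1) * M s i)"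
    and Xc: "\<And>t0. t0 \<ge> 0 \<Longrightarrow> ((\<lambda>t. Xnorm (x t - x t0) (\<lambda>i. M t i - M t0 i)) \<longlongrightarrow> 0) (at t0 within {0..})"
begin

definition tl :: "real \<Rightarrow> nat \<Rightarrow> real" where
  "tl s n = (\<Sum>i. real (i + n + 1) * M s (i + n))"

lemma tl_alt: "tl s n = (\<Sum>i. (\<lambda>i. real (i+1) * M s i) (i + n))"
  unfolding tl_def by simp

lemma tl_nonneg: "s \<ge> 0 \<Longrightarrow> tl s n \<ge> 0"
  unfolding tl_alt by (rule tail_nonneg[OF sM]) (auto intro!: mult_nonneg_nonneg Mnn)

lemma tl_mono: "s \<ge> 0 \<Longrightarrow> n \<le> m \<Longrightarrow> tl s m \<le> tl s n"
  unfolding tl_alt by (rule tail_mono[OF sM]) (auto intro!: mult_nonneg_nonneg Mnn)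

lemma tl_tendsto: "s \<ge> 0 \<Longrightarrow> e > 0 \<Longrightarrow> \<exists>N. \<forall>n\<ge>N. tl s n < e"
proof -
  assume s: "s \<ge> 0" and e: "e > 0"
  obtain N where N: "\<forall>n\<ge>N. norm (\<Sum>i. (\<lambda>i. real (i+1) * M s i) (i + n)) < e"
    using suminf_exist_split[OF e sM[OF s]] by blast
  show ?thesis unfolding tl_alt
  proof (intro exI allI impI)
    fix n assume "n \<ge> N"
    thus "(\<Sum>i. (\<lambda>i. real (i+1) * M s i) (i + n)) < e" using N by auto
  qed
qed

lemma tl_cont: assumes s: "s \<ge> 0" and s0: "s0 \<ge> 0"
  shows "tl s n \<le> tl s0 n + Xnorm (x s - x s0) (\<lambda>i. M s i - M s0 i)"
proof -
  define d where "d i = real (i+1) * \<bar>M s i - M s0 i\<bar>" for i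
  have sd: "summable d"
  proof (rule summable_comparison_test[OF _ summable_add[OF sM[OF s] sM[OF s0]]])
    show "\<exists>N. \<forall>n\<ge>N. norm (d n) \<le> real (n + 1) * M s n + real (n + 1) * M s0 n"
    proof (intro exI allI impI)
      fix n :: nat
      have "\<bar>M s n - M s0 n\<bar> \<le> M s n + M s0 n" using Mnn[OF s, of n] Mnn[OF s0, of n] by linarith
      hence "real (n+1) * \<bar>M s n - M s0 n\<bar> \<le> real (n+1) * (M s n + M s0 n)" by (intro mult_left_mono) auto
      thus "norm (d n) \<le> real (n + 1) * M s n + real (n + 1) * M s0 n"
        unfolding d_def by (simp add: abs_mult algebra_simps)
    qed
  qed
  have "tl s n \<le> (\<Sum>i. (\<lambda>i. real (i+1) * M s0 i) (i + n) + d (i + n))"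
  proof (unfold tl_alt, rule suminf_le)
    show "summable (\<lambda>i. (\<lambda>i. real (i+1) * M s i) (i + n))" using summable_ignore_initial_segment[OF sM[OF s]] .
    show "summable (\<lambda>i. (\<lambda>i. real (i+1) * M s0 i) (i + n) + d (i + n))"
      using summable_ignore_initial_segment[OF sM[OF s0]] summable_ignore_initial_segment[OF sd]
      by (intro summable_add) auto
    fix i
    have "M s (i+n) \<le> M s0 (i+n) + \<bar>M s (i + n) - M s0 (i + n)\<bar>" by linarith
    hence "real (i + n + 1) * M s (i+n) \<le> real (i + n + 1) * (M s0 (i+n) + \<bar>M s (i + n) - M s0 (i + n)\<bar>)"
      by (intro mult_left_mono) auto
    thus "real (i + n + 1) * M s (i + n) \<le> real (i + n + 1) * M s0 (i + n) + d (i + n)"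
      unfolding d_def by (simp add: algebra_simps)
  qed
  also have "\<dots> = tl s0 n + (\<Sum>i. d (i + n))"
    unfolding tl_alt
    using summable_ignore_initial_segment[OF sM[OF s0]] summable_ignore_initial_segment[OF sd]
    by (intro suminf_add[symmetric])
  also have "(\<Sum>i. d (i + n)) \<le> (\<Sum>i. d i)"
    by (rule tail_le_sum[OF sd]) (simp add: d_def)
  also have "(\<Sum>i. d i) \<le> Xnorm (x s - x s0) (\<lambda>i. M s i - M s0 i)"
    unfolding Xnorm_def d_def by simp
  finally show ?thesis by simp
qed

lemma tl_uniform:
  assumes "b \<ge> 0" "e > 0"
  shows "\<exists>n0. \<forall>n\<ge>n0. \<forall>s\<in>{0..b}. tl s n \<le> e"
proof (rule ccontr)
  assume "\<not> ?thesis"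
  hence H: "\<forall>n0. \<exists>n\<ge>n0. \<exists>s\<in>{0..b}. tl s n > e" by (auto simp: not_le)
  have "\<forall>m. \<exists>s. s \<in> {0..b} \<and> tl s m > e"
  proof
    fix m
    obtain n s where "n \<ge> m" "s \<in> {0..b}" "tl s n > e" using H by blast
    moreover have "tl s n \<le> tl s m" using tl_mono[of s m n] calculation by auto
    ultimately show "\<exists>s. s \<in> {0..b} \<and> tl s m > e" by force
  qed
  then obtain \<sigma> where \<sigma>: "\<And>m. \<sigma> m \<in> {0..b}" "\<And>m. tl (\<sigma> m) m > e" by metis
  obtain l \<rho> where l: "l \<in> {0..b}" "strict_mono \<rho>" "(\<sigma> \<circ> \<rho>) \<longlonglongrightarrow> l"
    using seq_compactE[OF compact_imp_seq_compact[OF compact_Icc], of \<sigma> 0 b] \<sigma>(1) by blast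
  have l0: "l \<ge> 0" using l(1) by simp
  have "\<forall>\<^sub>F s in at l within {0..}. dist (Xnorm (x s - x l) (\<lambda>i. M s i - M l i)) 0 < e/2"
  proof -
    have "e/2 > 0" using \<open>e > 0\<close> by simp
    thus ?thesis using Xc[OF l0] unfolding tendsto_iff by blast
  qed
  then obtain d where d: "d > 0" "\<And>s. s \<in> {0..} \<Longrightarrow> s \<noteq> l \<Longrightarrow> dist s l < d \<Longrightarrow> \<bar>Xnorm (x s - x l) (\<lambda>i. M s i - M l i)\<bar> < e/2"
    unfolding eventually_at dist_real_def by auto
  have d': "Xnorm (x s - x l) (\<lambda>i. M s i - M l i) < e/2" if "s \<ge> 0" "dist s l < d" for s
  proof (cases "s = l")
    case True thus ?thesis using \<open>e>0\<close> by (simp add: Xnorm_def)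
  next
    case False
    have "Xnorm (x s - x l) (\<lambda>i. M s i - M l i) \<le> \<bar>Xnorm (x s - x l) (\<lambda>i. M s i - M l i)\<bar>" by simp
    thus ?thesis using d(2)[of s] that False by auto
  qed
  obtain N1 where N1: "\<And>n. n \<ge> N1 \<Longrightarrow> tl l n < e/2" using tl_tendsto[OF l0, of "e/2"] \<open>e>0\<close> by auto
  obtain N2 where N2: "\<And>m. m \<ge> N2 \<Longrightarrow> dist ((\<sigma> \<circ> \<rho>) m) l < d"
    using l(3) d(1) unfolding lim_sequentially by blast
  define m where "m = max N1 N2"
  have "\<rho> m \<ge> m" using l(2) by (simp add: seq_suble)
  hence "tl l (\<rho> m) < e/2" using N1 unfolding m_def by auto
  moreover have "Xnorm (x (\<sigma> (\<rho> m)) - x l) (\<lambda>i. M (\<sigma> (\<rho> m)) i - M l i) < e/2"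
    using d'[of "\<sigma> (\<rho> m)"] N2[of m] \<sigma>(1)[of "\<rho> m"] unfolding m_def by auto
  moreover have "tl (\<sigma> (\<rho> m)) (\<rho> m) \<le> tl l (\<rho> m) + Xnorm (x (\<sigma> (\<rho> m)) - x l) (\<lambda>i. M (\<sigma> (\<rho> m)) i - M l i)"
    using tl_cont[of "\<sigma> (\<rho> m)" l] \<sigma>(1)[of "\<rho> m"] l0 by auto
  ultimately show False using \<sigma>(2)[of "\<rho> m"] by linarith
qed

lemma series_deriv:
  fixes c :: "nat \<Rightarrow> real" and k r t :: real
  assumes xcont: "continuous_on {0..} x" and kpos: "k > 0" and rpos: "r > 0"
    and xnn: "\<And>s. s \<ge> 0 \<Longrightarrow> x s \<ge> 0"
    and dM: "\<And>s i. s \<ge> 0 \<Longrightarrow> ((\<lambda>s. M s i) has_real_derivative S_rhs_M k r (x s) (M s) i) (at s within {0..})"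
    and cb: "\<And>i. \<bar>c i\<bar> \<le> real (i+1)" and t: "t \<ge> 0"
  shows "((\<lambda>s. \<Sum>i. c i * M s i) has_real_derivative (\<Sum>i. c i * S_rhs_M k r (x t) (M t) i)) (at t within {0..})"
proof -
  define S where "S = {0..t+1}"
  have SS: "S \<subseteq> {0..}" unfolding S_def by auto
  have "compact (x ` S)" unfolding S_def
    by (intro compact_continuous_image continuous_on_subset[OF xcont]) auto
  then obtain Kx0 where Kx0: "\<And>s. s \<in> S \<Longrightarrow> norm (x s) \<le> Kx0"
    using compact_imp_bounded bounded_iff by (metis imageI)
  define Kx where "Kx = max Kx0 0"
  have Kx: "\<And>s. s \<in> S \<Longrightarrow> x s \<le> Kx" "Kx \<ge> 0" unfolding Kx_def using Kx0 by (auto simp: max_def abs_le_iff) fastforce+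
  define K1 where "K1 = k * Kx + 1"
  have K1: "K1 \<ge> 1" unfolding K1_def using kpos Kx(2) by simp
  have kx: "k * x s + 1 \<le> K1" "k * x s \<ge> 0" if "s \<in> S" for s
    unfolding K1_def using Kx(1)[OF that] kpos xnn[of s] that SS by (auto intro: mult_left_mono)
  define f where "f n s = c n * M s n" for n s
  define f' where "f' n s = c n * S_rhs_M k r (x s) (M s) n" for n s
  define F where "F s i = real (i+1) * M s i" for s i
  define q where "q s i = (if i = 0 then r else 0) + 2 * K1 * (F s i + F s (i - 1))" for s i
  have Fnn: "F s i \<ge> 0" if "s \<in> S" for s i unfolding F_def using Mnn[of s i] that SS by auto
  have qbound: "\<bar>f' i s\<bar> \<le> q s i" if s: "s \<in> S" for s i
  proof -
    have s0: "s \<ge> 0" using s SS by auto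
    have M0: "M s j \<ge> 0" for j using Mnn[OF s0] .
    have "\<bar>f' i s\<bar> \<le> real (i+1) * \<bar>S_rhs_M k r (x s) (M s) i\<bar>"
      unfolding f'_def abs_mult by (intro mult_right_mono cb) auto
    also have "\<dots> \<le> q s i"
    proof (cases "i = 0")
      case True
      have "\<bar>S_rhs_M k r (x s) (M s) i\<bar> \<le> r + (k * x s + 1) * M s 0"
        using True rpos kx(2)[OF s] M0[of 0] mult_nonneg_nonneg[OF kx(2)[OF s] M0[of 0]] unfolding S_rhs_M_def by (auto simp: algebra_simps abs_le_iff)
      also have "\<dots> \<le> r + K1 * M s 0" using kx(1)[OF s] M0[of 0] by (intro add_left_mono mult_right_mono) auto
      also have "\<dots> \<le> q s i" unfolding q_def F_def using True K1 M0[of 0] by auto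
      finally show ?thesis using True by simp
    next
      case False
      have "\<bar>S_rhs_M k r (x s) (M s) i\<bar> \<le> (k * x s) * M s (i - 1) + (k * x s + 1) * M s i"
        using False kx(2)[OF s] M0[of i] M0[of "i-1"] mult_nonneg_nonneg[OF kx(2)[OF s] M0[of i]]
          mult_nonneg_nonneg[OF kx(2)[OF s] M0[of "i-1"]] unfolding S_rhs_M_def
        by (auto simp: algebra_simps abs_le_iff)
      also have "\<dots> \<le> K1 * M s (i - 1) + K1 * M s i"
        using kx[OF s] M0[of i] M0[of "i-1"] by (intro add_mono mult_right_mono) auto
      finally have "real (i+1) * \<bar>S_rhs_M k r (x s) (M s) i\<bar> \<le> real (i+1) * (K1 * M s (i - 1) + K1 * M s i)"
        by (intro mult_left_mono) auto
      also have "\<dots> = K1 * (real (i+1) * M s (i - 1)) + K1 * F s i" unfolding F_def by (simp add: algebra_simps)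
      also have "K1 * (real (i+1) * M s (i - 1)) \<le> K1 * (2 * F s (i - 1))"
      proof -
        have "real (i+1) \<le> 2 * real (i - 1 + 1)" using False by auto
        hence "real (i+1) * M s (i - 1) \<le> (2 * real (i - 1 + 1)) * M s (i - 1)" using M0[of "i-1"] by (intro mult_right_mono) auto
        hence "real (i+1) * M s (i - 1) \<le> 2 * F s (i - 1)" unfolding F_def by (simp add: algebra_simps)
        thus ?thesis using K1 by (intro mult_left_mono) auto
      qed
      also have "K1 * (2 * F s (i - 1)) + K1 * F s i \<le> q s i"
        unfolding q_def using False K1 Fnn[OF s, of i] Fnn[OF s, of "i-1"] by (auto simp: algebra_simps)
      finally show ?thesis by simp
    qed
    finally show ?thesis .
  qed
  have sF: "summable (F s)" if "s \<in> S" for s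
    unfolding F_def using sM[of s] that SS by auto
  have sq: "summable (q s)" if s: "s \<in> S" for s
  proof -
    have a: "summable (\<lambda>i. if i = 0 then r else 0)" using summable_single[of 0 "\<lambda>_. r"] by simp
    have b: "summable (\<lambda>i. F s (i - 1))"
      using summable_Suc_iff[of "\<lambda>i. F s (i - 1)"] sF[OF s] by simp
    show ?thesis unfolding q_def by (intro summable_add summable_mult a b sF[OF s])
  qed
  have sf': "summable (\<lambda>i. f' i s)" if s: "s \<in> S" for s
    by (rule summable_comparison_test[OF _ sq[OF s]]) (use qbound[OF s] in auto)
  have tailq: "(\<Sum>i. q s (i + n)) = 2 * K1 * (tl s n + tl s (n - 1))" if s: "s \<in> S" and n: "n \<ge> 1" for s n
  proof -
    have "(\<lambda>i. q s (i + n)) = (\<lambda>i. 2 * K1 * (F s (i + n) + F s (i + (n - 1))))"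
      unfolding q_def using n by (auto simp: algebra_simps)
    moreover have "(\<Sum>i. 2 * K1 * (F s (i + n) + F s (i + (n - 1)))) = 2 * K1 * ((\<Sum>i. F s (i + n)) + (\<Sum>i. F s (i + (n - 1))))"
      using summable_ignore_initial_segment[OF sF[OF s]]
      by (subst suminf_mult) (auto intro!: summable_add simp: suminf_add)
    ultimately show ?thesis unfolding tl_alt F_def by simp
  qed
  have tailbound: "\<bar>(\<Sum>i. f' (i + n) s)\<bar> \<le> 4 * K1 * tl s (n - 1)" if s: "s \<in> S" and n: "n \<ge> 1" for s n
  proof -
    have s0: "s \<ge> 0" using s SS by auto
    have sqn: "summable (\<lambda>i. q s (i + n))" using summable_ignore_initial_segment[OF sq[OF s], of n] .
    have sab: "summable (\<lambda>i. \<bar>f' (i + n) s\<bar>)"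
      by (rule summable_comparison_test[OF _ sqn]) (use qbound[OF s] in auto)
    have "\<bar>(\<Sum>i. f' (i + n) s)\<bar> \<le> (\<Sum>i. \<bar>f' (i + n) s\<bar>)"
      by (rule summable_rabs[OF sab])
    also have "\<dots> \<le> (\<Sum>i. q s (i + n))"
      by (rule suminf_le[OF _ sab sqn]) (use qbound[OF s] in auto)
    also have "\<dots> = 2 * K1 * (tl s n + tl s (n - 1))" using tailq[OF s n] .
    also have "\<dots> \<le> 2 * K1 * (tl s (n - 1) + tl s (n - 1))"
      using tl_mono[OF s0, of "n - 1" n] K1 by (intro mult_left_mono add_right_mono) auto
    finally show ?thesis by simp
  qed
  define g' where "g' s = (\<Sum>i. f' i s)" for s
  have ul: "uniform_limit S (\<lambda>n s. \<Sum>i<n. f' i s) g' sequentially"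
    unfolding uniform_limit_sequentially_iff
  proof (intro allI impI)
    fix e :: real assume e: "e > 0"
    have "\<exists>n0. \<forall>n\<ge>n0. \<forall>s\<in>S. tl s n \<le> e / (8 * K1)"
      using tl_uniform[of "t+1" "e / (8 * K1)"] t e K1 unfolding S_def by auto
    then obtain n0 where n0: "\<And>n s. n \<ge> n0 \<Longrightarrow> s \<in> S \<Longrightarrow> tl s n \<le> e / (8 * K1)"
      by blast
    show "\<exists>N. \<forall>n\<ge>N. \<forall>s\<in>S. dist (\<Sum>i<n. f' i s) (g' s) < e"
    proof (intro exI allI impI ballI)
      fix n s assume n: "n \<ge> n0 + 1" and s: "s \<in> S"
      have "g' s = (\<Sum>i. f' (i + n) s) + (\<Sum>i<n. f' i s)"
        unfolding g'_def using suminf_split_initial_segment[OF sf'[OF s], of n] .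
      hence "dist (\<Sum>i<n. f' i s) (g' s) = \<bar>(\<Sum>i. f' (i + n) s)\<bar>" by (simp add: dist_real_def)
      also have "\<dots> \<le> 4 * K1 * tl s (n - 1)" using tailbound[OF s] n by auto
      also have "\<dots> \<le> 4 * K1 * (e / (8 * K1))" using n0[of "n - 1" s] n s K1 by (intro mult_left_mono) auto
      also have "\<dots> < e" using K1 e by (simp add: field_simps)
      finally show "dist (\<Sum>i<n. f' i s) (g' s) < e" .
    qed
  qed
  have df: "(f n has_field_derivative f' n s) (at s within S)" if "s \<in> S" for n s
    unfolding f_def[abs_def] f'_def
    by (intro DERIV_cmult DERIV_subset[OF dM SS]) (use that SS in auto)
  have s00: "summable (\<lambda>n. f n 0)"
  proof (rule summable_comparison_test[OF _ sM[of 0]])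
    show "\<exists>N. \<forall>n\<ge>N. norm (f n 0) \<le> real (n + 1) * M 0 n"
      unfolding f_def using cb Mnn[of 0] by (auto simp: abs_mult intro!: mult_right_mono)
  qed simp
  obtain g where g: "\<And>s. s \<in> S \<Longrightarrow> (\<lambda>n. f n s) sums g s \<and> (g has_field_derivative g' s) (at s within S)"
  proof -
    have "\<exists>g. \<forall>s\<in>S. (\<lambda>n. f n s) sums g s \<and> (g has_field_derivative g' s) (at s within S)"
      using has_field_derivative_series[OF _ df ul _ s00] t unfolding S_def by (auto simp: convex_real_interval)
    thus ?thesis using that by blast
  qed
  have tS: "t \<in> S" unfolding S_def using t by auto
  have "((\<lambda>s. \<Sum>n. f n s) has_field_derivative g' t) (at t within S)"
  proof (rule has_field_derivative_transform_within[OF conjunct2[OF g[OF tS]] zero_less_one tS])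
    fix s assume "s \<in> S" thus "g s = (\<Sum>n. f n s)" using g sums_unique by metis
  qed
  moreover have "at t within S = at t within {0..}"
    by (rule at_within_nhd[of _ "{t - 1 <..< t + 1}"]) (auto simp: S_def)
  ultimately show ?thesis unfolding f_def g'_def f'_def by simp
qed

end

context
  fixes m :: "nat \<Rightarrow> real" and k r \<xi> :: real and N :: nat
  assumes mnn: "\<And>i. m i \<ge> 0" and sm: "summable (\<lambda>i. real (i+1) * m i)" and N1: "N \<ge> 1"
begin

lemma sm_if: "summable (\<lambda>i. if P i then g i * m i else 0)" if "\<And>i. \<bar>g i\<bar> \<le> real (i+1)" for P g
proof (rule summable_comparison_test[OF _ sm])
  show "\<exists>N. \<forall>n\<ge>N. norm (if P n then g n * m n else 0) \<le> real (n + 1) * m n"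
    using that mnn by (auto simp: abs_mult intro!: mult_right_mono)
qed

lemma sm1: "summable m" using sm_if[of "\<lambda>_. 1" "\<lambda>_. True"] by simp

lemma spm: "summable (\<lambda>i. if i = 0 then 0 else g i * m (i - 1))" if "\<And>i. \<bar>g (Suc i)\<bar> \<le> real (i+1)" for g
proof -
  have "summable (\<lambda>i. (\<lambda>i. if i = 0 then 0 else g i * m (i - 1)) (Suc i))"
    using sm_if[of "\<lambda>i. g (Suc i)" "\<lambda>_. True"] that by simp
  thus ?thesis by (rule summable_Suc_iff[THEN iffD1])
qed

lemma shift_suminf: "(\<Sum>i. if i = 0 then 0 else g i * m (i - 1)) = (\<Sum>i. g (Suc i) * m i)"
  if "\<And>i. \<bar>g (Suc i)\<bar> \<le> real (i+1)" for g
  using suminf_split_head[OF spm[OF that]] by simp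

lemma single_suminf: "(\<Sum>i. if i = j then f i else 0) = f j" for f :: "nat \<Rightarrow> real" and j
  using sums_single[of j f] sums_unique by metis

lemma rhs_decomp: "S_rhs_M k r \<xi> m i = (if i = 0 then r else 0) + k * \<xi> * (if i = 0 then 0 else 1 * m (i - 1)) - (k * \<xi> + 1) * m i"
  by (simp add: S_rhs_M_def algebra_simps)

lemma Iu: "(\<Sum>i. 1 * S_rhs_M k r \<xi> m i) = r - (\<Sum>i. m i)"
proof -
  have a: "summable (\<lambda>i. if i = 0 then r else 0)" using summable_single[of 0 "\<lambda>_. r"] by simp
  have b: "summable (\<lambda>i. if i = 0 then 0 else 1 * m (i - 1))" by (rule spm) simp
  have "(\<Sum>i. 1 * S_rhs_M k r \<xi> m i) = (\<Sum>i. (if i = 0 then r else 0)) + k * \<xi> * (\<Sum>i. if i = 0 then 0 else 1 * m (i - 1)) - (k * \<xi> + 1) * (\<Sum>i. m i)"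
    unfolding rhs_decomp using a b sm1
    by (subst suminf_diff[symmetric] suminf_add[symmetric] suminf_mult[symmetric]; (intro summable_add summable_mult summable_diff)?; simp?)+
  also have "(\<Sum>i. (if i = 0 then r else 0)) = r" using single_suminf[of 0 "\<lambda>_. r"] by simp
  also have "(\<Sum>i. if i = 0 then 0 else 1 * m (i - 1)) = (\<Sum>i. m i)"
    using shift_suminf[of "\<lambda>_. 1"] by simp
  finally show ?thesis by (simp add: algebra_simps)
qed

lemma Iw: "(\<Sum>i. (if i \<ge> N then 1 else 0) * S_rhs_M k r \<xi> m i) = - (\<Sum>i. if i \<ge> N then m i else 0) + k * \<xi> * m (N - 1)"
proof -
  define g :: "nat \<Rightarrow> real" where "g i = (if i \<ge> N then 1 else 0)" for i
  have gb: "\<bar>g (Suc i)\<bar> \<le> real (i+1)" for i unfolding g_def by auto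
  have pw: "(if i \<ge> N then 1 else 0) * S_rhs_M k r \<xi> m i = k * \<xi> * (if i = 0 then 0 else g i * m (i - 1)) - (k * \<xi> + 1) * (if i \<ge> N then 1 * m i else 0)" for i
    unfolding rhs_decomp g_def using N1 by auto
  have A: "summable (\<lambda>i. if i = 0 then 0 else g i * m (i - 1))" by (rule spm[OF gb])
  have B: "summable (\<lambda>i. if i \<ge> N then 1 * m i else 0)" by (rule sm_if) simp
  have "(\<Sum>i. (if i \<ge> N then 1 else 0) * S_rhs_M k r \<xi> m i) = k * \<xi> * (\<Sum>i. if i = 0 then 0 else g i * m (i - 1)) - (k * \<xi> + 1) * (\<Sum>i. if i \<ge> N then 1 * m i else 0)"
    unfolding pw using A B
    by (subst suminf_diff[symmetric] suminf_add[symmetric] suminf_mult[symmetric]; (intro summable_add summable_mult summable_diff)?; simp?)+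
  also have "(\<Sum>i. if i = 0 then 0 else g i * m (i - 1)) = (\<Sum>i. g (Suc i) * m i)" by (rule shift_suminf[OF gb])
  also have "\<dots> = (\<Sum>i. (if i = N - 1 then m i else 0) + (if i \<ge> N then 1 * m i else 0))"
    by (intro suminf_cong) (use N1 in \<open>auto simp: g_def\<close>)
  also have "\<dots> = m (N - 1) + (\<Sum>i. if i \<ge> N then 1 * m i else 0)"
    using B single_suminf[of "N - 1" m] by (subst suminf_add[symmetric]) auto
  finally have fin: "(\<Sum>i. (if i \<ge> N then 1 else 0) * S_rhs_M k r \<xi> m i) = k * \<xi> * (m (N - 1) + (\<Sum>i. if i \<ge> N then 1 * m i else 0)) - (k * \<xi> + 1) * (\<Sum>i. if i \<ge> N then 1 * m i else 0)" .
  have e1: "(\<lambda>i. if i \<ge> N then 1 * m i else 0) = (\<lambda>i. if i \<ge> N then m i else 0)" apply (rule ext) apply (simp only: mult_1_left) done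
  show ?thesis unfolding fin e1 by (simp add: algebra_simps)
qed

lemma Iv: "(\<Sum>i. (if i \<ge> N + 1 then real i else 0) * S_rhs_M k r \<xi> m i) =
    - (\<Sum>i. if i \<ge> N + 1 then real i * m i else 0) + k * \<xi> * (\<Sum>i. if i \<ge> N then m i else 0) + real N * k * \<xi> * m N"
proof -
  define g :: "nat \<Rightarrow> real" where "g i = (if i \<ge> N + 1 then real i else 0)" for i
  have gb: "\<bar>g (Suc i)\<bar> \<le> real (i+1)" for i unfolding g_def by auto
  have pw: "(if i \<ge> N + 1 then real i else 0) * S_rhs_M k r \<xi> m i = k * \<xi> * (if i = 0 then 0 else g i * m (i - 1)) - (k * \<xi> + 1) * (if i \<ge> N + 1 then real i * m i else 0)" for i
    unfolding rhs_decomp g_def using N1 by (auto simp: algebra_simps)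
  have A: "summable (\<lambda>i. if i = 0 then 0 else g i * m (i - 1))" by (rule spm[OF gb])
  have B: "summable (\<lambda>i. if i \<ge> N + 1 then real i * m i else 0)" by (rule sm_if) simp
  have B': "summable (\<lambda>i. if i \<ge> N then 1 * m i else 0)" by (rule sm_if) simp
  have "(\<Sum>i. (if i \<ge> N + 1 then real i else 0) * S_rhs_M k r \<xi> m i) = k * \<xi> * (\<Sum>i. if i = 0 then 0 else g i * m (i - 1)) - (k * \<xi> + 1) * (\<Sum>i. if i \<ge> N + 1 then real i * m i else 0)"
    unfolding pw using A B
    by (subst suminf_diff[symmetric] suminf_add[symmetric] suminf_mult[symmetric]; (intro summable_add summable_mult summable_diff)?; simp?)+
  also have "(\<Sum>i. if i = 0 then 0 else g i * m (i - 1)) = (\<Sum>i. g (Suc i) * m i)" by (rule shift_suminf[OF gb])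
  also have "\<dots> = (\<Sum>i. (if i \<ge> N then 1 * m i else 0) + ((if i = N then real i * m i else 0) + (if i \<ge> N + 1 then real i * m i else 0)))"
    by (intro suminf_cong) (auto simp: g_def algebra_simps)
  also have "\<dots> = (\<Sum>i. if i \<ge> N then 1 * m i else 0) + (real N * m N + (\<Sum>i. if i \<ge> N + 1 then real i * m i else 0))"
    using B B' single_suminf[of N "\<lambda>i. real i * m i"]
    by (subst suminf_add[symmetric] suminf_add[symmetric]; (intro summable_add summable_single)?; simp?)+
  finally have fin: "(\<Sum>i. (if i \<ge> N + 1 then real i else 0) * S_rhs_M k r \<xi> m i) = k * \<xi> * ((\<Sum>i. if i \<ge> N then 1 * m i else 0) + (real N * m N + (\<Sum>i. if i \<ge> N + 1 then real i * m i else 0))) - (k * \<xi> + 1) * (\<Sum>i. if i \<ge> N + 1 then real i * m i else 0)" .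
  have e1: "(\<lambda>i. if i \<ge> N then 1 * m i else 0) = (\<lambda>i. if i \<ge> N then m i else 0)" apply (rule ext) apply (simp only: mult_1_left) done
  show ?thesis unfolding fin e1 by (simp add: algebra_simps)
qed

end

lemma diffbound:
  fixes c m1 m2 :: "nat \<Rightarrow> real"
  assumes cb: "\<And>i. \<bar>c i\<bar> \<le> real (i+1)"
    and s1: "summable (\<lambda>i. real (i+1) * \<bar>m1 i\<bar>)" and s2: "summable (\<lambda>i. real (i+1) * \<bar>m2 i\<bar>)"
  shows "\<bar>(\<Sum>i. c i * m1 i) - (\<Sum>i. c i * m2 i)\<bar> \<le> (\<Sum>i. real (i+1) * \<bar>m1 i - m2 i\<bar>)"
proof -
  have sc: "summable (\<lambda>i. c i * m i)" if "summable (\<lambda>i. real (i+1) * \<bar>m i\<bar>)" for m :: "nat \<Rightarrow> real"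
  proof (rule summable_comparison_test[OF _ that])
    show "\<exists>N. \<forall>n\<ge>N. norm (c n * m n) \<le> real (n + 1) * \<bar>m n\<bar>"
      using cb by (auto simp: abs_mult intro!: mult_right_mono)
  qed
  have sd: "summable (\<lambda>i. real (i+1) * \<bar>m1 i - m2 i\<bar>)"
  proof (rule summable_comparison_test[OF _ summable_add[OF s1 s2]])
    show "\<exists>N. \<forall>n\<ge>N. norm (real (n+1) * \<bar>m1 n - m2 n\<bar>) \<le> real (n + 1) * \<bar>m1 n\<bar> + real (n + 1) * \<bar>m2 n\<bar>"
      by (auto simp: abs_mult distrib_left[symmetric] intro!: mult_left_mono)
  qed
  have "(\<Sum>i. c i * m1 i) - (\<Sum>i. c i * m2 i) = (\<Sum>i. c i * m1 i - c i * m2 i)"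
    using suminf_diff[OF sc[OF s1] sc[OF s2]] by simp
  also have "\<dots> = (\<Sum>i. c i * (m1 i - m2 i))" by (simp add: algebra_simps)
  finally have eq: "(\<Sum>i. c i * m1 i) - (\<Sum>i. c i * m2 i) = (\<Sum>i. c i * (m1 i - m2 i))" .
  have sab: "summable (\<lambda>i. \<bar>c i * (m1 i - m2 i)\<bar>)"
  proof (rule summable_comparison_test[OF _ sd])
    show "\<exists>N. \<forall>n\<ge>N. norm \<bar>c n * (m1 n - m2 n)\<bar> \<le> real (n+1) * \<bar>m1 n - m2 n\<bar>"
      using cb by (auto simp: abs_mult intro!: mult_right_mono)
  qed
  have "\<bar>(\<Sum>i. c i * (m1 i - m2 i))\<bar> \<le> (\<Sum>i. \<bar>c i * (m1 i - m2 i)\<bar>)" by (rule summable_rabs[OF sab])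
  also have "\<dots> \<le> (\<Sum>i. real (i+1) * \<bar>m1 i - m2 i\<bar>)"
    by (rule suminf_le[OF _ sab sd]) (use cb in \<open>auto simp: abs_mult intro!: mult_right_mono\<close>)
  finally show ?thesis unfolding eq .
qed

lemma single_le:
  fixes m1 m2 :: "nat \<Rightarrow> real"
  assumes s1: "summable (\<lambda>i. real (i+1) * \<bar>m1 i\<bar>)" and s2: "summable (\<lambda>i. real (i+1) * \<bar>m2 i\<bar>)"
  shows "\<bar>m1 j - m2 j\<bar> \<le> (\<Sum>i. real (i+1) * \<bar>m1 i - m2 i\<bar>)"
proof -
  have cb: "\<bar>(if i = j then 1 else 0)\<bar> \<le> real (i+1)" for i :: nat by auto
  have "\<bar>(\<Sum>i. (if i = j then 1 else 0) * m1 i) - (\<Sum>i. (if i = j then 1 else 0) * m2 i)\<bar> \<le> (\<Sum>i. real (i+1) * \<bar>m1 i - m2 i\<bar>)"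
    by (rule diffbound[OF cb s1 s2])
  moreover have "(\<Sum>i. (if i = j then 1 else 0) * m i) = m j" for m :: "nat \<Rightarrow> real"
  proof -
    have "(\<lambda>i. (if i = j then 1 else 0) * m i) = (\<lambda>i. if i = j then m i else 0)" by auto
    thus ?thesis using sums_single[of j m] sums_unique by metis
  qed
  ultimately show ?thesis by simp
qed

context
  fixes N :: nat and k r \<alpha> :: real and x :: "real \<Rightarrow> real" and M :: "real \<Rightarrow> nat \<Rightarrow> real"
  assumes N1: "N \<ge> 1" and kpos: "k > 0" and rpos: "r > 0"
    and sol: "S_solution N k r \<alpha> x M"
begin

lemma sol_facts:
  shows Mnn: "\<And>s i. s \<ge> 0 \<Longrightarrow> M s i \<ge> 0"
    and xnn: "\<And>s. s \<ge> 0 \<Longrightarrow> x s \<ge> 0"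
    and sMa: "\<And>s. s \<ge> 0 \<Longrightarrow> summable (\<lambda>i. real (i+1) * \<bar>M s i\<bar>)"
    and Xc: "\<And>t0. t0 \<ge> 0 \<Longrightarrow> ((\<lambda>t. Xnorm (x t - x t0) (\<lambda>i. M t i - M t0 i)) \<longlongrightarrow> 0) (at t0 within {0..})"
    and dx: "\<And>t. t \<ge> 0 \<Longrightarrow> (x has_real_derivative S_rhs_x N k \<alpha> (x t) (M t)) (at t within {0..})"
    and dM: "\<And>t i. t \<ge> 0 \<Longrightarrow> ((\<lambda>s. M s i) has_real_derivative S_rhs_M k r (x t) (M t) i) (at t within {0..})"
  using sol unfolding S_solution_def inXplus_def inX_def by auto

lemma sM: "s \<ge> 0 \<Longrightarrow> summable (\<lambda>i. real (i+1) * M s i)"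
  using sMa[of s] Mnn[of s] by simp

lemma xcont: "continuous_on {0..} x"
  by (rule DERIV_continuous_on[OF DERIV_subset[OF dx]]) auto

lemma sder: "\<And>c t. (\<And>i. \<bar>c i\<bar> \<le> real (i+1)) \<Longrightarrow> t \<ge> 0 \<Longrightarrow>
  ((\<lambda>s. \<Sum>i. c i * M s i) has_real_derivative (\<Sum>i. c i * S_rhs_M k r (x t) (M t) i)) (at t within {0..})"
  by (rule series_deriv[of M x, OF Mnn sM Xc xcont kpos rpos xnn dM]) auto

lemma Rderiv:
  assumes t: "t \<ge> 0" and j: "j \<in> {1..N+5}"
  shows "((\<lambda>s. reduce N (x s) (M s) j) has_real_derivative F_fin N k r \<alpha> (reduce N (x t) (M t)) j) (at t within {0..})"
proof -
  have R1: "reduce N \<xi> m 1 = \<xi>" and R2: "reduce N \<xi> m 2 = (\<Sum>i. m i)"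
    and R3: "reduce N \<xi> m 3 = (\<Sum>i. (if i \<ge> N + 1 then real i * m i else 0))"
    and R4: "reduce N \<xi> m 4 = (\<Sum>i. (if i \<ge> N then m i else 0))"
    and R5: "\<And>j. 5 \<le> j \<Longrightarrow> j \<le> N + 5 \<Longrightarrow> reduce N \<xi> m j = m (j - 5)" for \<xi> m
    unfolding reduce_def by auto
  have R1': "reduce N \<xi> m (Suc 0) = \<xi>" for \<xi> m unfolding reduce_def by auto
  have mt: "\<And>i. M t i \<ge> 0" "summable (\<lambda>i. real (i+1) * M t i)" using Mnn[OF t] sM[OF t] by auto
  consider "j = 1" | "j = 2" | "j = 3" | "j = 4" | "j = 5" | "6 \<le> j \<and> j \<le> N + 5" using j by fastforce
  thus ?thesis
  proof cases
    case 1
    show ?thesis unfolding 1 R1 using dx[OF t]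
      by (simp add: F_fin_def R1 R1' R2 R3 S_rhs_x_def algebra_simps)
  next
    case 2
    have "((\<lambda>s. \<Sum>i. 1 * M s i) has_real_derivative (\<Sum>i. 1 * S_rhs_M k r (x t) (M t) i)) (at t within {0..})"
      by (rule sder) (use t in auto)
    moreover have "(\<Sum>i. 1 * S_rhs_M k r (x t) (M t) i) = r - (\<Sum>i. M t i)"
      by (rule Iu[OF mt N1])
    ultimately show ?thesis unfolding 2 R2 by (simp add: F_fin_def R2)
  next
    case 3
    have "((\<lambda>s. \<Sum>i. (if i \<ge> N + 1 then real i else 0) * M s i) has_real_derivative
          (\<Sum>i. (if i \<ge> N + 1 then real i else 0) * S_rhs_M k r (x t) (M t) i)) (at t within {0..})"
      by (rule sder) (use t in auto)
    moreover have "(\<Sum>i. (if i \<ge> N + 1 then real i else 0) * S_rhs_M k r (x t) (M t) i) =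
      - (\<Sum>i. if i \<ge> N + 1 then real i * M t i else 0) + k * x t * (\<Sum>i. if i \<ge> N then M t i else 0) + real N * k * x t * M t N"
      by (rule Iv[OF mt N1])
    moreover have "(\<lambda>s. \<Sum>i. (if i \<ge> N + 1 then real i else 0) * M s i) = (\<lambda>s. reduce N (x s) (M s) 3)"
      unfolding R3 by (intro ext suminf_cong) auto
    moreover have "reduce N (x t) (M t) (N + 5) = M t N" using R5[of "N+5"] by simp
    ultimately have d: "((\<lambda>s. reduce N (x s) (M s) 3) has_real_derivative
      - (\<Sum>i. if i \<ge> N + 1 then real i * M t i else 0) + k * x t * (\<Sum>i. if i \<ge> N then M t i else 0) + real N * k * x t * M t N) (at t within {0..})"
      by metis
    have v: "F_fin N k r \<alpha> (reduce N (x t) (M t)) 3 = - (\<Sum>i. if i \<ge> N + 1 then real i * M t i else 0) + k * x t * (\<Sum>i. if i \<ge> N then M t i else 0) + real N * k * x t * M t N"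
      using R5[of "N+5"] by (simp add: F_fin_def R1 R1' R3 R4 algebra_simps)
    show ?thesis unfolding 3 v using d .
  next
    case 4
    have "((\<lambda>s. \<Sum>i. (if i \<ge> N then 1 else 0) * M s i) has_real_derivative
          (\<Sum>i. (if i \<ge> N then 1 else 0) * S_rhs_M k r (x t) (M t) i)) (at t within {0..})"
      by (rule sder) (use t in auto)
    moreover have "(\<Sum>i. (if i \<ge> N then 1 else 0) * S_rhs_M k r (x t) (M t) i) =
      - (\<Sum>i. if i \<ge> N then M t i else 0) + k * x t * M t (N - 1)"
      by (rule Iw[OF mt N1])
    moreover have "(\<lambda>s. \<Sum>i. (if i \<ge> N then 1 else 0) * M s i) = (\<lambda>s. reduce N (x s) (M s) 4)"
      unfolding R4 by (intro ext suminf_cong) auto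
    ultimately have d: "((\<lambda>s. reduce N (x s) (M s) 4) has_real_derivative
      - (\<Sum>i. if i \<ge> N then M t i else 0) + k * x t * M t (N - 1)) (at t within {0..})"
      by metis
    have v: "F_fin N k r \<alpha> (reduce N (x t) (M t)) 4 = - (\<Sum>i. if i \<ge> N then M t i else 0) + k * x t * M t (N - 1)"
      using R5[of "N+4"] N1 by (simp add: F_fin_def R1 R1' R4 algebra_simps)
    show ?thesis unfolding 4 v using d .
  next
    case 5
    have "(\<lambda>s. reduce N (x s) (M s) 5) = (\<lambda>s. M s 0)" using R5[of 5] by simp
    thus ?thesis unfolding 5 using dM[OF t, of 0] R5[of 5] R1
      by (simp add: F_fin_def S_rhs_M_def algebra_simps)
  next
    case 6
    have "(\<lambda>s. reduce N (x s) (M s) j) = (\<lambda>s. M s (j - 5))" using R5[of j] 6 by simp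
    moreover have "reduce N (x t) (M t) (j - 1) = M t (j - 5 - 1)" using R5[of "j - 1" "x t" "M t"] 6 by (simp add: le_diff_conv2 del: One_nat_def) (metis diff_le_self order_trans One_nat_def)
    moreover have "reduce N (x t) (M t) j = M t (j - 5)" using R5[of j] 6 by simp
    moreover have "j \<noteq> 1" "j \<noteq> 2" "j \<noteq> 3" "j \<noteq> 4" "j \<noteq> 5" "j - 5 \<noteq> 0" using 6 by auto
    ultimately show ?thesis using dM[OF t, of "j - 5"] 6 R1
      by (simp add: F_fin_def S_rhs_M_def algebra_simps)
  qed
qed

end

theorem theorem4p2:
  fixes N :: nat and k r \<alpha> xe :: real and Me :: "nat \<Rightarrow> real"
  assumes "N \<ge> 1" and "k > 0" and "r > 0" and "\<alpha> > 0"
    and "\<alpha> / r < mustar N"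
    and "S_equilibrium N k r \<alpha> xe Me"
    and "F_loc_exp_stable N k r \<alpha> (reduce N xe Me)"
  shows "\<forall>(x :: real \<Rightarrow> real) (M :: real \<Rightarrow> nat \<Rightarrow> real).
           S_solution N k r \<alpha> x M \<and>
           ((\<lambda>t. Xnorm (x t - xe) (\<lambda>i. M t i - Me i)) \<longlongrightarrow> 0) at_top \<longrightarrow>
           (\<exists>C>0. \<exists>\<gamma>>0. \<forall>t\<ge>0. Xnorm (x t - xe) (\<lambda>i. M t i - Me i) \<le> C * exp (- \<gamma> * t))"
proof (intro allI impI, elim conjE)
  fix x :: "real \<Rightarrow> real" and M :: "real \<Rightarrow> nat \<Rightarrow> real"
  assume sol: "S_solution N k r \<alpha> x M"
    and conv: "((\<lambda>t. Xnorm (x t - xe) (\<lambda>i. M t i - Me i)) \<longlongrightarrow> 0) at_top"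
  note N1 = assms(1) and kpos = assms(2) and rpos = assms(3)
  note SF = sol_facts[OF N1 kpos rpos sol]
  have xcont: "continuous_on {0..} x" by (rule xcont[OF N1 kpos rpos sol])
  have eqx: "xe \<ge> 0" and Menn: "\<And>i. Me i \<ge> 0" and sMe: "summable (\<lambda>i. real (i+1) * \<bar>Me i\<bar>)"
    and eqM: "\<And>i. S_rhs_M k r xe Me i = 0"
    using assms(6) unfolding S_equilibrium_def inXplus_def inX_def by auto
  define Ue where "Ue = reduce N xe Me"
  obtain \<delta> C \<gamma> where \<delta>: "\<delta> > 0" and C: "C > 0" and \<gamma>: "\<gamma> > 0"
    and stab: "\<And>U0 U. fin_dist N U0 Ue < \<delta> \<Longrightarrow> U 0 = U0 \<Longrightarrow> F_solution N k r \<alpha> U \<Longrightarrow>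
        (\<forall>t\<ge>0. fin_dist N (U t) Ue \<le> C * exp (- \<gamma> * t) * fin_dist N U0 Ue)"
  proof -
    have "\<exists>\<delta>>0. \<exists>C>0. \<exists>\<gamma>>0. \<forall>U0. fin_dist N U0 Ue < \<delta> \<longrightarrow>
        (\<exists>U. U 0 = U0 \<and> F_solution N k r \<alpha> U) \<and>
        (\<forall>U. U 0 = U0 \<and> F_solution N k r \<alpha> U \<longrightarrow>
           (\<forall>t\<ge>0. fin_dist N (U t) Ue \<le> C * exp (- \<gamma> * t) * fin_dist N U0 Ue))"
      using assms(7) unfolding F_loc_exp_stable_def Ue_def by blast
    thus ?thesis using that by blast
  qed
  define R where "R t = reduce N (x t) (M t)" for t
  define S where "S t = (\<Sum>i. real (i+1) * \<bar>M t i - Me i\<bar>)" for t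
  define nrm where "nrm t = Xnorm (x t - xe) (\<lambda>i. M t i - Me i)" for t
  have nrmS: "nrm t = \<bar>x t - xe\<bar> + S t" for t unfolding nrm_def S_def Xnorm_def ..
  have sD: "summable (\<lambda>i. real (i+1) * \<bar>M t i - Me i\<bar>)" if t: "t \<ge> 0" for t
  proof (rule summable_comparison_test[OF _ summable_add[OF SF(3)[OF t] sMe]])
    show "\<exists>N. \<forall>n\<ge>N. norm (real (n+1) * \<bar>M t n - Me n\<bar>) \<le> real (n + 1) * \<bar>M t n\<bar> + real (n + 1) * \<bar>Me n\<bar>"
      by (auto simp: abs_mult distrib_left[symmetric] intro!: mult_left_mono)
  qed
  have S0: "S t \<ge> 0" if "t \<ge> 0" for t unfolding S_def by (intro suminf_nonneg sD that) simp
  have termb: "\<bar>R t j - Ue j\<bar> \<le> nrm t" if t: "t \<ge> 0" and j: "j \<in> {1..N+5}" for t j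
  proof -
    have R1: "reduce N \<xi> m 1 = \<xi>" and R2: "reduce N \<xi> m 2 = (\<Sum>i. 1 * m i)"
      and R3: "reduce N \<xi> m 3 = (\<Sum>i. (if i \<ge> N + 1 then real i else 0) * m i)"
      and R4: "reduce N \<xi> m 4 = (\<Sum>i. (if i \<ge> N then 1 else 0) * m i)"
      and R5: "\<And>j. 5 \<le> j \<Longrightarrow> j \<le> N + 5 \<Longrightarrow> reduce N \<xi> m j = m (j - 5)" for \<xi> m
      unfolding reduce_def by (auto intro!: suminf_cong)
    have db: "\<bar>(\<Sum>i. c i * M t i) - (\<Sum>i. c i * Me i)\<bar> \<le> S t" if "\<And>i. \<bar>c i\<bar> \<le> real (i+1)" for c
      unfolding S_def by (rule diffbound[OF that SF(3)[OF t] sMe])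
    have "\<bar>R t j - Ue j\<bar> \<le> \<bar>x t - xe\<bar> \<or> \<bar>R t j - Ue j\<bar> \<le> S t"
    proof -
      consider "j = 1" | "j = 2" | "j = 3" | "j = 4" | "5 \<le> j \<and> j \<le> N + 5" using j by fastforce
      thus ?thesis
      proof cases
        case 1 thus ?thesis unfolding R_def Ue_def by (simp add: reduce_def)
      next
        case 2 thus ?thesis unfolding R_def Ue_def using db[of "\<lambda>_. 1"] by (simp add: R2)
      next
        case 3 thus ?thesis unfolding R_def Ue_def using db[of "\<lambda>i. if i \<ge> N + 1 then real i else 0"] by (simp add: R3)
      next
        case 4 thus ?thesis unfolding R_def Ue_def using db[of "\<lambda>i. if i \<ge> N then 1 else 0"] by (simp add: R4)
      next
        case 5 thus ?thesis unfolding R_def Ue_def R5[OF conjunct1[OF 5] conjunct2[OF 5]] S_def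
          using single_le[OF SF(3)[OF t] sMe] by simp
      qed
    qed
    thus ?thesis using S0[OF t] unfolding nrmS by auto
  qed
  have fd: "fin_dist N (R t) Ue \<le> real (N + 5) * nrm t" if t: "t \<ge> 0" for t
    unfolding fin_dist_def using sum_bounded_above[of "{1..N+5}" "\<lambda>j. \<bar>R t j - Ue j\<bar>" "nrm t"] termb[OF t]
    by (simp add: add.commute)
  have xfd: "\<bar>x t - xe\<bar> \<le> fin_dist N (R t) Ue" for t
  proof -
    have "\<bar>R t 1 - Ue 1\<bar> \<le> fin_dist N (R t) Ue" unfolding fin_dist_def
      by (rule member_le_sum) auto
    thus ?thesis unfolding R_def Ue_def reduce_def by simp
  qed
  have "\<forall>\<^sub>F t in at_top. nrm t < \<delta> / real (N + 5)"
    using order_tendstoD(2)[OF conv[folded nrm_def]] \<delta> by simp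
  moreover have "\<forall>\<^sub>F t in at_top. t \<ge> (0::real)" by (rule eventually_ge_at_top)
  ultimately have "\<forall>\<^sub>F t in at_top. nrm t < \<delta> / real (N + 5) \<and> t \<ge> 0" by (rule eventually_conj)
  then obtain T0 where "\<forall>t\<ge>T0. nrm t < \<delta> / real (N + 5) \<and> t \<ge> 0"
    unfolding eventually_at_top_linorder by blast
  then obtain T where T: "T \<ge> 0" "nrm T < \<delta> / real (N + 5)" by blast
  have fdT: "fin_dist N (R T) Ue < \<delta>"
  proof -
    have "fin_dist N (R T) Ue \<le> real (N + 5) * nrm T" by (rule fd[OF T(1)])
    also have "\<dots> < real (N + 5) * (\<delta> / real (N + 5))" using T(2) by (intro mult_strict_left_mono) auto
    finally show ?thesis by simp
  qed
  have Fsol: "F_solution N k r \<alpha> (\<lambda>s. R (T + s))"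
    unfolding F_solution_def
  proof (intro allI impI ballI)
    fix t :: real and j assume t: "t \<ge> 0" and j: "j \<in> {1..N+5}"
    have d1: "((\<lambda>s. R s j) has_real_derivative F_fin N k r \<alpha> (R (T + t)) j) (at (T + t) within {0..})"
      unfolding R_def by (rule Rderiv[OF N1 kpos rpos sol]) (use t T j in auto)
    have d1': "((\<lambda>s. R s j) has_real_derivative F_fin N k r \<alpha> (R (T + t)) j) (at ((\<lambda>s. T + s) t) within ((\<lambda>s. T + s) ` {0..}))"
      by (rule DERIV_subset[OF d1]) (use T in auto)
    have d2: "((\<lambda>s. T + s) has_real_derivative 1) (at t within {0..})"
      by (auto intro!: derivative_eq_intros)
    show "((\<lambda>s. R (T + s) j) has_real_derivative F_fin N k r \<alpha> (R (T + t)) j) (at t within {0..})"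
      using DERIV_image_chain[OF d1' d2] by (simp add: o_def)
  qed
  have xdec: "\<bar>x t - xe\<bar> \<le> C * \<delta> * exp (- \<gamma> * (t - T))" if "t \<ge> T" for t
  proof -
    have "fin_dist N (R (T + (t - T))) Ue \<le> C * exp (- \<gamma> * (t - T)) * fin_dist N (R T) Ue"
    proof -
      have "\<forall>s\<ge>0. fin_dist N (R (T + s)) Ue \<le> C * exp (- \<gamma> * s) * fin_dist N (R T) Ue"
        using stab[OF fdT _ Fsol] by simp
      from this[rule_format, of "t - T"] show ?thesis using that by simp
    qed
    also have "\<dots> \<le> C * exp (- \<gamma> * (t - T)) * \<delta>" using fdT C by (intro mult_left_mono) auto
    finally show ?thesis using xfd[of t] by (simp add: algebra_simps)
  qed
  have "compact ((\<lambda>s. x s - xe) ` {0..T})"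
    by (intro compact_continuous_image continuous_intros continuous_on_subset[OF xcont]) auto
  then obtain Bx0 where Bx0: "\<And>s. s \<in> {0..T} \<Longrightarrow> norm (x s - xe) \<le> Bx0"
    using compact_imp_bounded bounded_iff by (metis imageI)
  define Bx where "Bx = max Bx0 0"
  have Bx: "\<And>s. s \<in> {0..T} \<Longrightarrow> \<bar>x s - xe\<bar> \<le> Bx" "Bx \<ge> 0" unfolding Bx_def using Bx0 by force+
  define \<gamma>' where "\<gamma>' = min \<gamma> (1/2)"
  have g': "\<gamma>' > 0" "\<gamma>' < 1" "\<gamma>' \<le> \<gamma>" unfolding \<gamma>'_def using \<gamma> by auto
  define c where "c = k * (Bx + C * \<delta>) * exp (\<gamma>' * T)"
  have c0: "c \<ge> 0" unfolding c_def using kpos Bx(2) C \<delta> by auto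
  have decay0: "\<bar>x s - xe\<bar> \<le> (Bx + C * \<delta>) * exp (\<gamma>' * T) * exp (- \<gamma>' * s)" if s: "s \<ge> 0" for s
  proof (cases "s \<le> T")
    case True
    have "\<bar>x s - xe\<bar> \<le> Bx" using Bx(1)[of s] True s by auto
    also have "\<dots> \<le> (Bx + C * \<delta>) * 1" using C \<delta> by simp
    also have "\<dots> \<le> (Bx + C * \<delta>) * (exp (\<gamma>' * T) * exp (- \<gamma>' * s))"
    proof (intro mult_left_mono)
      have "exp (\<gamma>' * T) * exp (- \<gamma>' * s) = exp (\<gamma>' * (T - s))" by (simp add: exp_add[symmetric] algebra_simps)
      also have "\<dots> \<ge> 1" using True g' by simp
      finally show "1 \<le> exp (\<gamma>' * T) * exp (- \<gamma>' * s)" .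
    qed (use Bx(2) C \<delta> in auto)
    finally show ?thesis by (simp add: algebra_simps)
  next
    case False
    have "\<bar>x s - xe\<bar> \<le> C * \<delta> * exp (- \<gamma> * (s - T))" using xdec False by simp
    also have "\<dots> \<le> C * \<delta> * exp (- \<gamma>' * (s - T))"
      using C \<delta> g' False by (intro mult_left_mono) (auto intro!: mult_right_mono)
    also have "\<dots> \<le> (Bx + C * \<delta>) * exp (- \<gamma>' * (s - T))" using Bx(2) by (intro mult_right_mono) auto
    also have "\<dots> = (Bx + C * \<delta>) * exp (\<gamma>' * T) * exp (- \<gamma>' * s)"
      by (simp add: exp_add[symmetric] algebra_simps)
    finally show ?thesis .
  qed
  have decay: "k * \<bar>x s - xe\<bar> \<le> c * exp (- \<gamma>' * s)" if "s \<ge> 0" for s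
    using mult_left_mono[OF decay0[OF that], of k] kpos unfolding c_def by (simp add: algebra_simps)
  obtain C2 where C2: "\<And>t. t \<ge> 0 \<Longrightarrow> S t \<le> C2 * exp (- \<gamma>' * t)"
    using part2[of k x M r xe Me \<gamma>' c, OF kpos SF(2) xcont SF(6) SF(3) eqM sMe g'(1) g'(2) c0 decay]
    unfolding S_def by auto
  define Cf where "Cf = \<bar>c / k\<bar> + \<bar>C2\<bar> + 1"
  show "\<exists>C>0. \<exists>\<gamma>>0. \<forall>t\<ge>0. Xnorm (x t - xe) (\<lambda>i. M t i - Me i) \<le> C * exp (- \<gamma> * t)"
  proof (intro exI conjI allI impI)
    have "\<bar>c / k\<bar> + \<bar>C2\<bar> \<ge> 0" by simp
    thus "Cf > 0" unfolding Cf_def by linarith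
    show "\<gamma>' > 0" by (rule g'(1))
    fix t :: real assume t: "t \<ge> 0"
    have "\<bar>x t - xe\<bar> \<le> c / k * exp (- \<gamma>' * t)"
      using decay[OF t] kpos by (simp add: field_simps)
    also have "\<dots> \<le> \<bar>c / k\<bar> * exp (- \<gamma>' * t)" by (intro mult_right_mono abs_ge_self) auto
    finally have a: "\<bar>x t - xe\<bar> \<le> \<bar>c / k\<bar> * exp (- \<gamma>' * t)" .
    have b: "S t \<le> \<bar>C2\<bar> * exp (- \<gamma>' * t)"
      using C2[OF t] by (rule order_trans) (intro mult_right_mono, auto)
    have "nrm t \<le> (\<bar>c / k\<bar> + \<bar>C2\<bar>) * exp (- \<gamma>' * t)" unfolding nrmS using a b by (simp add: algebra_simps)
    also have "\<dots> \<le> Cf * exp (- \<gamma>' * t)" unfolding Cf_def by (intro mult_right_mono) auto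
    finally show "Xnorm (x t - xe) (\<lambda>i. M t i - Me i) \<le> Cf * exp (- \<gamma>' * t)" unfolding nrm_def .
  qed
qed

end
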